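(* For any two trees $S$ and $T$, the set $Sh(S,T)$ with the percolation order is a finite distributive lattice.
   Context: A tree is a finite connected graph without cycles whose external edges are open. One external edge is the root; the others are leaves. Each vertex has one outgoing edge (towards the root) and a strictly positive number of incoming edges. No planar structure. Shuffle: for trees $S,T$ with root edges $r_S,r_T$, a shuffle is a tree $A$ with edges labelled by pairs $(s,t)\in E(S)\times E(T)$ such that: (1) the root of $A$ is labelled $(r_S,r_T)$; (2) the labelling restricts to a bijection from leaves of $A$ onto $\mathrm{Leaves}(S)\times\mathrm{Leaves}(T)$; (3) if an edge labelled $(s,t)$ is not a leaf, the incoming edges of the vertex of $A$ above it are labelled either exactly $(s_1,t),\dots,(s_m,t)$ for $s_1,\dots,s_m$ the edges immediately above $s$ in $S$ (an $S$-vertex), or exactly $(s,t_1),\dots,(s,t_n)$ for $t_1,\dots,t_n$ the edges immediately above $t$ in $T$ (a $T$-vertex). Shuffles are taken up to isomorphism of labelled trees; $Sh(S,T)$ is the set of shuffles. Percolation order: a single percolation step applies to a shuffle $A$ containing an edge $(s,t)$ whose vertex above is an $S$-vertex with incoming edges $(s_1,t),\dots,(s_m,t)$, each of which has above it a $T$-vertex with incoming edges $(s_i,t_1),\dots,(s_i,t_n)$; it replaces this configuration by a $T$-vertex above $(s,t)$ with incoming edges $(s,t_1),\dots,(s,t_n)$, each with an $S$-vertex above it with incoming edges $(s_1,t_j),\dots,(s_m,t_j)$, leaving everything above the edges $(s_i,t_j)$ unchanged. The percolation order on $Sh(S,T)$ is: $A\le B$ iff $B$ is obtained from $A$ by a finite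 (possibly empty) sequence of single percolation steps. *)

theory Defs
  imports "HOL-Algebra.Lattice"
begin

text \<open>A (non-planar) tree is given by its finite set of edges E, its root edge r,
  and the function ch assigning to each edge the set of edges immediately above it
  (the incoming edges of the vertex above it). An edge e with ch e = {} is a leaf
  (no vertex above it); otherwise there is a vertex above e whose incoming edges are
  exactly ch e (a strictly positive number of them).\<close>

type_synonym 'e tree = "'e set \<times> 'e \<times> ('e \<Rightarrow> 'e set)"

definition is_tree :: "'e set \<Rightarrow> 'e \<Rightarrow> ('e \<Rightarrow> 'e set) \<Rightarrow> bool" where
  "is_tree E r ch \<longleftrightarrow>
     finite E \<and> r \<in> E \<and>
     (\<forall>e\<in>E. ch e \<subseteq> E) \<and>
     (\<forall>e\<in>E. r \<notin> ch e) \<and>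
     (\<forall>e\<in>E. e \<noteq> r \<longrightarrow> (\<exists>!p. p \<in> E \<and> e \<in> ch p)) \<and>
     (\<forall>e\<in>E. (r, e) \<in> {(x, y). x \<in> E \<and> y \<in> ch x}\<^sup>*)"

definition tree :: "'e tree \<Rightarrow> bool" where
  "tree S = (case S of (E, r, ch) \<Rightarrow> is_tree E r ch)"

definition edges :: "'e tree \<Rightarrow> 'e set" where "edges S = fst S"
definition root :: "'e tree \<Rightarrow> 'e" where "root S = fst (snd S)"
definition above :: "'e tree \<Rightarrow> 'e \<Rightarrow> 'e set" where "above S = snd (snd S)"

definition leaves :: "'e tree \<Rightarrow> 'e set" where
  "leaves S = {e \<in> edges S. above S e = {}}"

text \<open>Labelled trees (candidate shuffles). Edges are taken from nat (any finite tree
  is isomorphic to one with edges in nat); labels are pairs of edges of S and T.\<close>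

type_synonym 'l ltree = "nat set \<times> nat \<times> (nat \<Rightarrow> nat set) \<times> (nat \<Rightarrow> 'l)"

definition ltree_tree :: "'l ltree \<Rightarrow> nat tree" where
  "ltree_tree A = (case A of (E, r, ch, lab) \<Rightarrow> (E, r, ch))"

definition lab :: "'l ltree \<Rightarrow> nat \<Rightarrow> 'l" where
  "lab A = snd (snd (snd A))"

definition is_shuffle :: "'e tree \<Rightarrow> 'f tree \<Rightarrow> ('e \<times> 'f) ltree \<Rightarrow> bool" where
  "is_shuffle S T A \<longleftrightarrow>
     (let U = ltree_tree A; l = lab A in
       tree U \<and>
       (\<forall>e\<in>edges U. l e \<in> edges S \<times> edges T) \<and>
       l (root U) = (root S, root T) \<and>
       bij_betw l (leaves U) (leaves S \<times> leaves T) \<and>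
       (\<forall>e\<in>edges U. above U e \<noteq> {} \<longrightarrow>
          (bij_betw l (above U e) ((\<lambda>s'. (s', snd (l e))) ` above S (fst (l e))) \<or>
           bij_betw l (above U e) ((\<lambda>t'. (fst (l e), t')) ` above T (snd (l e))))))"

definition ltree_iso :: "'l ltree \<Rightarrow> 'l ltree \<Rightarrow> bool" where
  "ltree_iso A B \<longleftrightarrow>
     (\<exists>\<phi>. bij_betw \<phi> (edges (ltree_tree A)) (edges (ltree_tree B)) \<and>
          \<phi> (root (ltree_tree A)) = root (ltree_tree B) \<and>
          (\<forall>e\<in>edges (ltree_tree A).
              above (ltree_tree B) (\<phi> e) = \<phi> ` above (ltree_tree A) e \<and>
              lab B (\<phi> e) = lab A e))"

definition Sh :: "'e tree \<Rightarrow> 'f tree \<Rightarrow> ('e \<times> 'f) ltree set set" where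
  "Sh S T = {{B. is_shuffle S T B \<and> ltree_iso A B} | A. is_shuffle S T A}"

text \<open>In A: the edge a labelled (s,t) has an S-vertex above it with incoming edges X,
  labelled (s_i,t); each x in X has a T-vertex above with incoming edges labelled
  (s_i,t_j). In B: phi(a) has a T-vertex above with incoming edges Y labelled (s,t_j),
  and each y in Y labelled (s,t_j) has an S-vertex above whose incoming edges are the
  (images of the) edges of A labelled (s_i,t_j), i.e. the edges above X in A whose
  T-component is t_j. Everything else is unchanged (phi is a label-preserving
  identification of the remaining edges, respecting the tree structure).\<close>

definition perc_step :: "'e tree \<Rightarrow> 'f tree \<Rightarrow> ('e \<times> 'f) ltree \<Rightarrow> ('e \<times> 'f) ltree \<Rightarrow> bool" where
  "perc_step S T A B \<longleftrightarrow>
     is_shuffle S T A \<and> is_shuffle S T B \<and>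
     (let UA = ltree_tree A; UB = ltree_tree B; lA = lab A; lB = lab B in
      \<exists>a X Y \<phi> s t.
        a \<in> edges UA \<and> lA a = (s, t) \<and> above UA a = X \<and>
        above S s \<noteq> {} \<and> above T t \<noteq> {} \<and>
        bij_betw lA X ((\<lambda>s'. (s', t)) ` above S s) \<and>
        (\<forall>x\<in>X. bij_betw lA (above UA x) ((\<lambda>t'. (fst (lA x), t')) ` above T t)) \<and>
        Y \<subseteq> edges UB \<and>
        bij_betw \<phi> (edges UA - X) (edges UB - Y) \<and>
        \<phi> (root UA) = root UB \<and>
        (\<forall>e\<in>edges UA - X. lB (\<phi> e) = lA e) \<and>
        (\<forall>e\<in>edges UA - X - {a}. above UB (\<phi> e) = \<phi> ` above UA e) \<and>
        above UB (\<phi> a) = Y \<and>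
        bij_betw lB Y ((\<lambda>t'. (s, t')) ` above T t) \<and>
        (\<forall>y\<in>Y. above UB y =
           \<phi> ` {e. \<exists>x\<in>X. e \<in> above UA x \<and> snd (lA e) = snd (lB y)}))"

definition perc_rel :: "'e tree \<Rightarrow> 'f tree \<Rightarrow> ('e \<times> 'f) ltree set \<Rightarrow> ('e \<times> 'f) ltree set \<Rightarrow> bool" where
  "perc_rel S T C D \<longleftrightarrow> C \<in> Sh S T \<and> D \<in> Sh S T \<and> (\<exists>A\<in>C. \<exists>B\<in>D. perc_step S T A B)"

definition perc_le :: "'e tree \<Rightarrow> 'f tree \<Rightarrow> ('e \<times> 'f) ltree set \<Rightarrow> ('e \<times> 'f) ltree set \<Rightarrow> bool" where
  "perc_le S T C D \<longleftrightarrow> C \<in> Sh S T \<and> D \<in> Sh S T \<and> (perc_rel S T)\<^sup>*\<^sup>* C D"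

definition Sh_poset :: "'e tree \<Rightarrow> 'f tree \<Rightarrow> ('e \<times> 'f) ltree set gorder" where
  "Sh_poset S T = \<lparr>carrier = Sh S T, eq = (=), le = perc_le S T\<rparr>"

definition distrib_lattice_on :: "('a, 'b) gorder_scheme \<Rightarrow> bool" where
  "distrib_lattice_on L \<longleftrightarrow> lattice L \<and>
     (\<forall>x\<in>carrier L. \<forall>y\<in>carrier L. \<forall>z\<in>carrier L.
        x \<sqinter>\<^bsub>L\<^esub> (y \<squnion>\<^bsub>L\<^esub> z) = (x \<sqinter>\<^bsub>L\<^esub> y) \<squnion>\<^bsub>L\<^esub> (x \<sqinter>\<^bsub>L\<^esub> z))"

end

theory Submission
  imports Defs
begin
locale rtree =
  fixes E :: "'a set" and r :: 'a and ch :: "'a \<Rightarrow> 'a set"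
  assumes tr: "is_tree E r ch"
begin

definition R where "R = {(x, y). x \<in> E \<and> y \<in> ch x}"
definition le where "le x y \<longleftrightarrow> (x, y) \<in> R\<^sup>*"
definition lt where "lt x y \<longleftrightarrow> le x y \<and> x \<noteq> y"
definition Inn where "Inn = {x \<in> E. ch x \<noteq> {}}"
definition depth where "depth x = card {y. le y x}"

lemma finE: "finite E" and rE: "r \<in> E" and chE: "x \<in> E \<Longrightarrow> ch x \<subseteq> E"
  and r_nch: "x \<in> E \<Longrightarrow> r \<notin> ch x"
  and par: "x \<in> E \<Longrightarrow> x \<noteq> r \<Longrightarrow> \<exists>!p. p \<in> E \<and> x \<in> ch p"
  and reach: "x \<in> E \<Longrightarrow> (r, x) \<in> R\<^sup>*"
  using tr unfolding is_tree_def R_def by auto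

lemma chE': "x \<in> E \<Longrightarrow> y \<in> ch x \<Longrightarrow> y \<in> E" using chE by auto

lemma par_uniq: "p \<in> E \<Longrightarrow> q \<in> E \<Longrightarrow> x \<in> ch p \<Longrightarrow> x \<in> ch q \<Longrightarrow> p = q"
proof -
  assume a: "p \<in> E" "q \<in> E" "x \<in> ch p" "x \<in> ch q"
  have "x \<in> E" using a chE by auto
  moreover have "x \<noteq> r" using a r_nch by auto
  ultimately show "p = q" using par a by blast
qed

lemma le_refl[simp]: "le x x" unfolding le_def by simp
lemma le_trans: "le x y \<Longrightarrow> le y z \<Longrightarrow> le x z" unfolding le_def by simp
lemma child_le: "p \<in> E \<Longrightarrow> c \<in> ch p \<Longrightarrow> le p c" unfolding le_def R_def by auto
lemma le_E: "le x y \<Longrightarrow> x \<in> E \<Longrightarrow> y \<in> E"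
  unfolding le_def
proof (induction rule: rtrancl_induct)
  case (step y z) then show ?case using chE unfolding R_def by auto
qed simp
lemma le_E2: "le x y \<Longrightarrow> y \<in> E \<Longrightarrow> x \<in> E"
  unfolding le_def by (erule converse_rtranclE) (auto simp: R_def)
lemma r_le: "x \<in> E \<Longrightarrow> le r x" using reach le_def by auto

lemma le_child_cases: "le y c \<Longrightarrow> c \<in> ch p \<Longrightarrow> p \<in> E \<Longrightarrow> y = c \<or> le y p"
  unfolding le_def
proof (erule rtranclE)
  fix w assume "(y, w) \<in> R\<^sup>*" "(w, c) \<in> R" "c \<in> ch p" "p \<in> E"
  then have "w = p" using par_uniq unfolding R_def by auto
  then show "y = c \<or> (y, p) \<in> R\<^sup>*" using \<open>(y, w) \<in> R\<^sup>*\<close> by simp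
qed simp

lemma le_r: "le x r \<Longrightarrow> x = r"
  unfolding le_def by (erule rtranclE) (auto simp: R_def r_nch)

lemma acyc: "x \<in> E \<Longrightarrow> (x, x) \<notin> R\<^sup>+"
proof -
  assume "x \<in> E"
  then have "(r, x) \<in> R\<^sup>*" by (rule reach)
  then show ?thesis
  proof (induction rule: rtrancl_induct)
    case base
    show ?case
    proof
      assume "(r, r) \<in> R\<^sup>+"
      then obtain w where "(w, r) \<in> R" by (auto elim: tranclE)
      then show False using r_nch unfolding R_def by auto
    qed
  next
    case (step y z)
    show ?case
    proof
      assume "(z, z) \<in> R\<^sup>+"
      then obtain w where w: "(z, w) \<in> R\<^sup>*" "(w, z) \<in> R" using tranclD2 by metis
      have "w = y" using w(2) step(2) par_uniq unfolding R_def by auto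
      then have "(y, y) \<in> R\<^sup>+" using w step(2) by (meson rtrancl_into_trancl2)
      then show False using step(3) by simp
    qed
  qed
qed

lemma antisym: "le x y \<Longrightarrow> le y x \<Longrightarrow> x = y"
proof (rule ccontr)
  assume a: "le x y" "le y x" "x \<noteq> y"
  then have "(x, y) \<in> R\<^sup>+" unfolding le_def by (simp add: rtrancl_eq_or_trancl)
  then have "(x, x) \<in> R\<^sup>+" using a(2) unfolding le_def by simp
  moreover have "x \<in> E" using \<open>(x, y) \<in> R\<^sup>+\<close> by (auto elim: converse_tranclE simp: R_def)
  ultimately show False using acyc by simp
qed

lemma not_le_child: "p \<in> E \<Longrightarrow> c \<in> ch p \<Longrightarrow> \<not> le c p"
proof
  assume a: "p \<in> E" "c \<in> ch p" "le c p"
  then have "(p, c) \<in> R" unfolding R_def by auto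
  then have "(p, p) \<in> R\<^sup>+" using a(3) unfolding le_def by (rule rtrancl_into_trancl2)
  then show False using acyc a(1) by simp
qed

lemma child_neq: "p \<in> E \<Longrightarrow> c \<in> ch p \<Longrightarrow> c \<noteq> p"
  using not_le_child le_refl by blast

lemma comparable: "le x z \<Longrightarrow> le y z \<Longrightarrow> z \<in> E \<Longrightarrow> le x y \<or> le y x"
proof -
  assume a: "le x z" "le y z" "z \<in> E"
  have "(r, z) \<in> R\<^sup>*" using a(3) reach by simp
  then show ?thesis using a(1,2)
  proof (induction arbitrary: x y rule: rtrancl_induct)
    case base then show ?case using le_r by auto
  next
    case (step p z)
    have pz: "p \<in> E" "z \<in> ch p" using step(2) unfolding R_def by auto
    have "x = z \<or> le x p" using le_child_cases step(4) pz by auto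
    moreover have "y = z \<or> le y p" using le_child_cases step(5) pz by auto
    ultimately show ?case using step(3)[of x y] step(4,5) by auto
  qed
qed

lemma lt_child: "lt x y \<Longrightarrow> \<exists>c\<in>ch x. le c y \<and> x \<in> E"
proof -
  assume "lt x y"
  then have "(x, y) \<in> R\<^sup>*" "x \<noteq> y" unfolding lt_def le_def by auto
  then obtain c where "(x, c) \<in> R" "(c, y) \<in> R\<^sup>*" by (metis converse_rtranclE)
  then show ?thesis unfolding R_def le_def by auto
qed

lemma lt_Int: "lt x y \<Longrightarrow> x \<in> Inn"
  using lt_child unfolding Inn_def by blast

lemma lt_E: "lt x y \<Longrightarrow> x \<in> E" using lt_child by blast

lemma anc_fin: "y \<in> E \<Longrightarrow> finite {x. le x y}"
  by (rule finite_subset[OF _ finE]) (auto intro: le_E2)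

lemma depth_lt: "lt x y \<Longrightarrow> y \<in> E \<Longrightarrow> depth x < depth y"
  unfolding depth_def
proof (rule psubset_card_mono)
  assume a: "lt x y" "y \<in> E"
  show "finite {xa. le xa y}" using anc_fin a by simp
  have "{xa. le xa x} \<subseteq> {xa. le xa y}" using a unfolding lt_def using le_trans by blast
  moreover have "y \<notin> {xa. le xa x}" using a antisym unfolding lt_def by blast
  ultimately show "{xa. le xa x} \<subset> {xa. le xa y}" by auto
qed

lemma depth_le: "le x y \<Longrightarrow> y \<in> E \<Longrightarrow> depth x \<le> depth y"
  using depth_lt lt_def by fastforce

lemma child_lt: "p \<in> E \<Longrightarrow> c \<in> ch p \<Longrightarrow> lt p c"
  unfolding lt_def using child_le child_neq by auto

lemma lt_trans1: "lt x y \<Longrightarrow> le y z \<Longrightarrow> lt x z"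
  unfolding lt_def by (metis le_trans antisym)
lemma lt_trans2: "le x y \<Longrightarrow> lt y z \<Longrightarrow> lt x z"
  unfolding lt_def by (metis le_trans antisym)

lemma leaf_above: "x \<in> E \<Longrightarrow> \<exists>l. le x l \<and> l \<in> E \<and> ch l = {}"
proof -
  assume x: "x \<in> E"
  let ?A = "{y \<in> E. le x y}"
  have "finite ?A" using finE by simp
  moreover have "x \<in> ?A" using x by simp
  have bnd: "\<forall>y. y \<in> ?A \<longrightarrow> depth y < card E + 1"
  proof (intro allI impI)
    fix y assume "y \<in> ?A"
    then have "{z. le z y} \<subseteq> E" using le_E2 by auto
    then have "card {z. le z y} \<le> card E" using card_mono[OF finE] by auto
    then show "depth y < card E + 1" unfolding depth_def by simp
  qed
  obtain l where l: "l \<in> ?A" "\<forall>y. y \<in> ?A \<longrightarrow> depth y \<le> depth l"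
    using ex_has_greatest_nat[of "\<lambda>y. y \<in> ?A" x depth "card E + 1", OF \<open>x \<in> ?A\<close> bnd] by blast
  have "ch l = {}"
  proof (rule ccontr)
    assume "ch l \<noteq> {}"
    then obtain c where c: "c \<in> ch l" by auto
    have lE: "l \<in> E" "le x l" using l(1) by auto
    have cE: "c \<in> E" using chE' lE(1) c .
    have "le x c" using le_trans[OF lE(2) child_le[OF lE(1) c]] .
    then have "c \<in> ?A" using cE by simp
    moreover have "depth l < depth c" using depth_lt[OF child_lt[OF lE(1) c] cE] .
    ultimately show False using l(2) by force
  qed
  then show ?thesis using l(1) by auto
qed

lemma leaf_eq: "le x y \<Longrightarrow> ch x = {} \<Longrightarrow> x = y"
  using lt_child[of x y] unfolding lt_def by auto

end

lemma tree_simps[simp]: "edges (EE, rr, cc) = EE" "root (EE, rr, cc) = rr" "above (EE, rr, cc) = cc"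
  "leaves (EE, rr, cc) = {e \<in> EE. cc e = {}}"
  by (auto simp: edges_def root_def above_def leaves_def)

lemma ltree_simps[simp]: "ltree_tree (EE, rr, cc, ll) = (EE, rr, cc)" "lab (EE, rr, cc, ll) = ll"
  by (auto simp: ltree_tree_def lab_def)

lemma tree_rtree: "tree (E, r, ch) \<longleftrightarrow> rtree E r ch"
  by (simp add: tree_def rtree_def)

locale shuf = S: rtree ES rS chS + T: rtree ET rT chT
  for ES :: "'e set" and rS chS and ET :: "'f set" and rT chT
begin

definition Sk :: "'e \<times> 'f \<Rightarrow> ('e \<times> 'f) set" where "Sk z = (\<lambda>a'. (a', snd z)) ` chS (fst z)"
definition Tk :: "'e \<times> 'f \<Rightarrow> ('e \<times> 'f) set" where "Tk z = (\<lambda>b'. (fst z, b')) ` chT (snd z)"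

definition Down :: "('e \<times> 'f) set set" where
  "Down = {D. D \<subseteq> S.Inn \<times> T.Inn \<and>
     (\<forall>a b. (a, b) \<in> D \<longrightarrow> (\<forall>b'. T.lt b' b \<longrightarrow> (a, b') \<in> D) \<and>
        (\<forall>a'. S.le a a' \<longrightarrow> a' \<in> S.Inn \<longrightarrow> (a', b) \<in> D))}"

definition CC :: "('e \<times> 'f) set \<Rightarrow> 'e \<Rightarrow> 'f \<Rightarrow> bool" where
  "CC D a b \<longleftrightarrow> (a \<in> S.Inn \<longrightarrow> (\<forall>b'. T.lt b' b \<longrightarrow> (a, b') \<in> D)) \<and>
     (b \<in> T.Inn \<longrightarrow> (\<forall>a'. S.lt a' a \<longrightarrow> (a', b) \<notin> D))"

definition LL :: "('e \<times> 'f) set \<Rightarrow> ('e \<times> 'f) set" where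
  "LL D = {(a, b). a \<in> ES \<and> b \<in> ET \<and> CC D a b}"

definition Sst :: "('e \<times> 'f) set \<Rightarrow> 'e \<times> 'f \<Rightarrow> bool" where
  "Sst D z \<longleftrightarrow> fst z \<in> S.Inn \<and> (snd z \<notin> T.Inn \<or> z \<notin> D)"
definition Tst :: "('e \<times> 'f) set \<Rightarrow> 'e \<times> 'f \<Rightarrow> bool" where
  "Tst D z \<longleftrightarrow> snd z \<in> T.Inn \<and> (fst z \<notin> S.Inn \<or> z \<in> D)"

definition kids :: "('e \<times> 'f) set \<Rightarrow> 'e \<times> 'f \<Rightarrow> ('e \<times> 'f) set" where
  "kids D z = (if Sst D z then Sk z else if Tst D z then Tk z else {})"

definition dsum :: "'e \<times> 'f \<Rightarrow> nat" where "dsum z = S.depth (fst z) + T.depth (snd z)"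

lemma Down_D: "D \<in> Down \<Longrightarrow> (a, b) \<in> D \<Longrightarrow> T.lt b' b \<Longrightarrow> (a, b') \<in> D"
  and Down_U: "D \<in> Down \<Longrightarrow> (a, b) \<in> D \<Longrightarrow> S.le a a' \<Longrightarrow> a' \<in> S.Inn \<Longrightarrow> (a', b) \<in> D"
  and Down_sub: "D \<in> Down \<Longrightarrow> D \<subseteq> S.Inn \<times> T.Inn"
  unfolding Down_def by blast+

lemma Inn_E: "a \<in> S.Inn \<Longrightarrow> a \<in> ES" "b \<in> T.Inn \<Longrightarrow> b \<in> ET"
  unfolding S.Inn_def T.Inn_def by auto

lemma kids_cases: "z \<in> kids D q \<Longrightarrow> (Sst D q \<and> z \<in> Sk q) \<or> (\<not> Sst D q \<and> Tst D q \<and> z \<in> Tk q)"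
  unfolding kids_def by (auto split: if_splits)

lemma kids_empty: "kids D z = {} \<longleftrightarrow> fst z \<notin> S.Inn \<and> snd z \<notin> T.Inn"
  unfolding kids_def Sst_def Tst_def Sk_def Tk_def S.Inn_def T.Inn_def by auto

lemma root_LL: "(rS, rT) \<in> LL D"
  unfolding LL_def CC_def using S.rE T.rE S.le_r T.le_r S.lt_def T.lt_def by auto

lemma LL_sub: "LL D \<subseteq> ES \<times> ET" unfolding LL_def by auto

lemma LL_fin: "finite (LL D)"
  using LL_sub finite_subset S.finE T.finE by blast

lemma kids_LL:
  assumes D: "D \<in> Down" and z: "(a, b) \<in> LL D" and c: "c \<in> kids D (a, b)"
  shows "c \<in> LL D"
proof -
  have ab: "a \<in> ES" "b \<in> ET" "CC D a b" using z unfolding LL_def by auto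
  from kids_cases[OF c] show ?thesis
  proof
    assume h: "Sst D (a, b) \<and> c \<in> Sk (a, b)"
    then obtain a1 where a1: "a1 \<in> chS a" "c = (a1, b)" unfolding Sk_def by auto
    have aI: "a \<in> S.Inn" using h unfolding Sst_def by auto
    have "a1 \<in> ES" using S.chE' ab a1 by auto
    moreover have "CC D a1 b"
      unfolding CC_def
    proof (intro conjI impI allI)
      fix b' assume "a1 \<in> S.Inn" "T.lt b' b"
      then have "(a, b') \<in> D" using ab(3) aI unfolding CC_def by auto
      then show "(a1, b') \<in> D" using Down_U[OF D] S.child_le[OF ab(1) a1(1)] \<open>a1 \<in> S.Inn\<close> by auto
    next
      fix a' assume bI: "b \<in> T.Inn" and lt: "S.lt a' a1"
      then have "a' = a1 \<or> S.le a' a" using S.le_child_cases[OF _ a1(1) ab(1)] S.lt_def by auto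
      then have "a' = a \<or> S.lt a' a" using lt S.lt_def by auto
      then show "(a', b) \<notin> D"
      proof
        assume "a' = a" then show ?thesis using h bI unfolding Sst_def by auto
      next
        assume "S.lt a' a" then show ?thesis using ab(3) bI unfolding CC_def by auto
      qed
    qed
    ultimately show ?thesis using a1 ab unfolding LL_def by auto
  next
    assume h: "\<not> Sst D (a, b) \<and> Tst D (a, b) \<and> c \<in> Tk (a, b)"
    then obtain b1 where b1: "b1 \<in> chT b" "c = (a, b1)" unfolding Tk_def by auto
    have bI: "b \<in> T.Inn" and aD: "a \<in> S.Inn \<Longrightarrow> (a, b) \<in> D" using h unfolding Tst_def by auto
    have "b1 \<in> ET" using T.chE' ab b1 by auto
    moreover have "CC D a b1"
      unfolding CC_def
    proof (intro conjI impI allI)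
      fix b' assume aI: "a \<in> S.Inn" and lt: "T.lt b' b1"
      then have "b' = b1 \<or> T.le b' b" using T.le_child_cases[OF _ b1(1) ab(2)] T.lt_def by auto
      then have "b' = b \<or> T.lt b' b" using lt T.lt_def by auto
      then show "(a, b') \<in> D" using aD aI ab(3) unfolding CC_def by auto
    next
      fix a' assume "b1 \<in> T.Inn" "S.lt a' a"
      show "(a', b1) \<notin> D"
      proof
        assume "(a', b1) \<in> D"
        then have "(a', b) \<in> D" using Down_D[OF D] T.child_lt[OF ab(2) b1(1)] by auto
        then show False using ab(3) bI \<open>S.lt a' a\<close> unfolding CC_def by auto
      qed
    qed
    ultimately show ?thesis using b1 ab unfolding LL_def by auto
  qed
qed

lemma root_not_kid: "q \<in> LL D \<Longrightarrow> (rS, rT) \<notin> kids D q"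
proof
  assume q: "q \<in> LL D" and r: "(rS, rT) \<in> kids D q"
  have "q \<in> ES \<times> ET" using q LL_sub by blast
  then have "fst q \<in> ES" "snd q \<in> ET" by (auto simp: mem_Times_iff)
  then show False using kids_cases[OF r] S.r_nch T.r_nch unfolding Sk_def Tk_def by auto
qed

lemma kid_uniq:
  assumes D: "D \<in> Down" and q: "q \<in> LL D" and q': "q' \<in> LL D"
    and z: "z \<in> kids D q" and z': "z \<in> kids D q'"
  shows "q = q'"
proof -
  obtain a b where zab: "z = (a, b)" by fastforce
  have "q \<in> ES \<times> ET" "q' \<in> ES \<times> ET" using q q' LL_sub by blast+
  then have qE: "fst q \<in> ES" "snd q \<in> ET" "fst q' \<in> ES" "snd q' \<in> ET" by (auto simp: mem_Times_iff)
  have SS: False if h: "Sst D q" "z \<in> Sk q" "Tst D q'" "z \<in> Tk q'"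
    and qq: "q \<in> LL D" "q' \<in> LL D" for q q'
  proof -
    obtain pa where q1: "q = (pa, b)" "a \<in> chS pa" using h(2) zab unfolding Sk_def by (cases q) auto
    obtain pb where q2: "q' = (a, pb)" "b \<in> chT pb" using h(4) zab unfolding Tk_def by (cases q') auto
    have "pa \<in> ES" "pb \<in> ET" using qq q1 q2 LL_sub by auto
    have "pa \<in> S.Inn" using h(1) q1 unfolding Sst_def by auto
    moreover have "T.lt pb b" using T.child_lt[OF \<open>pb \<in> ET\<close> q2(2)] .
    ultimately have "(pa, pb) \<in> D" using qq(1) q1 unfolding LL_def CC_def by auto
    moreover have "pb \<in> T.Inn" using h(3) q2 unfolding Tst_def by auto
    moreover have "S.lt pa a" using S.child_lt[OF \<open>pa \<in> ES\<close> q1(2)] .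
    ultimately show False using qq(2) q2 unfolding LL_def CC_def by auto
  qed
  from kids_cases[OF z] kids_cases[OF z'] show ?thesis
  proof (elim disjE conjE)
    assume "z \<in> Sk q" "z \<in> Sk q'"
    then show ?thesis using qE S.par_uniq unfolding Sk_def by (cases q, cases q') auto
  next
    assume "z \<in> Tk q" "z \<in> Tk q'"
    then show ?thesis using qE T.par_uniq unfolding Tk_def by (cases q, cases q') auto
  next
    assume "Sst D q" "z \<in> Sk q" "Tst D q'" "z \<in> Tk q'"
    then show ?thesis using SS q q' by blast
  next
    assume "Tst D q" "z \<in> Tk q" "Sst D q'" "z \<in> Sk q'"
    then show ?thesis using SS q q' by blast
  qed
qed

end

context shuf
begin

lemma LL_parent:
  assumes D: "D \<in> Down" and z: "(a, b) \<in> LL D" and nr: "(a, b) \<noteq> (rS, rT)"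
  shows "\<exists>q\<in>LL D. (a, b) \<in> kids D q \<and> dsum q < dsum (a, b)"
proof -
  have ab: "a \<in> ES" "b \<in> ET" and C: "CC D a b" using z unfolding LL_def by auto
  have Sp: ?thesis if pa: "pa \<in> ES" "a \<in> chS pa" and inL: "(pa, b) \<in> LL D" for pa
  proof -
    have "S.lt pa a" using S.child_lt[OF pa] .
    have "pa \<in> S.Inn" using pa unfolding S.Inn_def by auto
    moreover have "b \<notin> T.Inn \<or> (pa, b) \<notin> D" using C \<open>S.lt pa a\<close> unfolding CC_def by auto
    ultimately have "Sst D (pa, b)" unfolding Sst_def by auto
    then have "(a, b) \<in> kids D (pa, b)" using pa unfolding kids_def Sk_def by auto
    moreover have "dsum (pa, b) < dsum (a, b)" unfolding dsum_def using S.depth_lt[OF \<open>S.lt pa a\<close> ab(1)] by simp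
    ultimately show ?thesis using inL by blast
  qed
  have Tp: ?thesis if pb: "pb \<in> ET" "b \<in> chT pb" and inL: "(a, pb) \<in> LL D" for pb
  proof -
    have "T.lt pb b" using T.child_lt[OF pb] .
    have "pb \<in> T.Inn" using pb unfolding T.Inn_def by auto
    moreover have "a \<notin> S.Inn \<or> (a, pb) \<in> D" using C \<open>T.lt pb b\<close> unfolding CC_def by auto
    ultimately have "\<not> Sst D (a, pb)" "Tst D (a, pb)" unfolding Sst_def Tst_def by auto
    then have "(a, b) \<in> kids D (a, pb)" using pb unfolding kids_def Tk_def by auto
    moreover have "dsum (a, pb) < dsum (a, b)" unfolding dsum_def using T.depth_lt[OF \<open>T.lt pb b\<close> ab(2)] by simp
    ultimately show ?thesis using inL by blast
  qed
  have noltS: "\<not> S.lt a' rS" for a' using S.le_r S.lt_def by auto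
  have noltT: "\<not> T.lt b' rT" for b' using T.le_r T.lt_def by auto
  show ?thesis
  proof (cases "a = rS")
    case True
    then have "b \<noteq> rT" using nr by auto
    then obtain pb where pb: "pb \<in> ET" "b \<in> chT pb" using T.par ab(2) by blast
    have "CC D a pb" unfolding CC_def
    proof (intro conjI impI allI)
      fix b' assume "a \<in> S.Inn" "T.lt b' pb"
      then show "(a, b') \<in> D" using C T.lt_trans1[OF \<open>T.lt b' pb\<close> T.child_le[OF pb]] unfolding CC_def by auto
    next
      fix a' assume "S.lt a' a" then show "(a', pb) \<notin> D" using True noltS by auto
    qed
    then show ?thesis using Tp[OF pb] pb ab unfolding LL_def by auto
  next
    case aF: False
    then obtain pa where pa: "pa \<in> ES" "a \<in> chS pa" using S.par ab(1) by blast
    have pal: "S.lt pa a" using S.child_lt[OF pa] .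
    have CS2: "b \<in> T.Inn \<longrightarrow> (\<forall>a'. S.lt a' pa \<longrightarrow> (a', b) \<notin> D)"
      using C S.lt_trans1[OF _ S.child_le[OF pa]] unfolding CC_def by blast
    show ?thesis
    proof (cases "b = rT")
      case True
      have "CC D pa b" unfolding CC_def using CS2 True noltT by auto
      then show ?thesis using Sp[OF pa] pa ab unfolding LL_def by auto
    next
      case bF: False
      then obtain pb where pb: "pb \<in> ET" "b \<in> chT pb" using T.par ab(2) by blast
      have pbl: "T.lt pb b" using T.child_lt[OF pb] .
      have CT1: "a \<in> S.Inn \<longrightarrow> (\<forall>b'. T.lt b' pb \<longrightarrow> (a, b') \<in> D)"
        using C T.lt_trans1[OF _ T.child_le[OF pb]] unfolding CC_def by blast
      have "CC D pa b \<or> CC D a pb"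
      proof (rule ccontr)
        assume "\<not> (CC D pa b \<or> CC D a pb)"
        then obtain b' a' where h: "pa \<in> S.Inn" "T.lt b' b" "(pa, b') \<notin> D"
          "pb \<in> T.Inn" "S.lt a' a" "(a', pb) \<in> D"
          using CS2 CT1 unfolding CC_def by blast
        have "a' = a \<or> S.le a' pa" using S.le_child_cases[OF _ pa(2) pa(1)] h(5) S.lt_def by auto
        then have "S.le a' pa" using h(5) S.lt_def by auto
        then have "(pa, pb) \<in> D" using Down_U[OF D h(6) _ h(1)] by auto
        have "b' = b \<or> T.le b' pb" using T.le_child_cases[OF _ pb(2) pb(1)] h(2) T.lt_def by auto
        then have "b' = pb \<or> T.lt b' pb" using h(2) T.lt_def by auto
        then show False using \<open>(pa, pb) \<in> D\<close> h(3) Down_D[OF D \<open>(pa, pb) \<in> D\<close>] by auto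
      qed
      then show ?thesis
      proof
        assume "CC D pa b" then show ?thesis using Sp[OF pa] pa ab unfolding LL_def by auto
      next
        assume "CC D a pb" then show ?thesis using Tp[OF pb] pb ab unfolding LL_def by auto
      qed
    qed
  qed
qed

definition enum :: "('e \<times> 'f) set \<Rightarrow> nat \<Rightarrow> 'e \<times> 'f" where
  "enum D = (SOME h. bij_betw h {0..<card (LL D)} (LL D))"
definition idx :: "('e \<times> 'f) set \<Rightarrow> 'e \<times> 'f \<Rightarrow> nat" where
  "idx D = inv_into {0..<card (LL D)} (enum D)"
definition canon :: "('e \<times> 'f) set \<Rightarrow> ('e \<times> 'f) ltree" where
  "canon D = ({0..<card (LL D)}, idx D (rS, rT), \<lambda>i. idx D ` kids D (enum D i), enum D)"

lemma enum_bij: "bij_betw (enum D) {0..<card (LL D)} (LL D)"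
  unfolding enum_def using someI_ex[OF ex_bij_betw_nat_finite[OF LL_fin]] .

lemma idx_bij: "bij_betw (idx D) (LL D) {0..<card (LL D)}"
  unfolding idx_def using bij_betw_inv_into[OF enum_bij] .

lemma enum_idx: "z \<in> LL D \<Longrightarrow> enum D (idx D z) = z"
  unfolding idx_def using enum_bij by (simp add: bij_betw_def f_inv_into_f)

lemma idx_enum: "i < card (LL D) \<Longrightarrow> idx D (enum D i) = i"
  unfolding idx_def using enum_bij by (simp add: bij_betw_def inv_into_f_f)

lemma enum_in: "i < card (LL D) \<Longrightarrow> enum D i \<in> LL D"
  using bij_betwE[OF enum_bij[of D]] by auto

lemma idx_in: "z \<in> LL D \<Longrightarrow> idx D z < card (LL D)"
  using bij_betwE[OF idx_bij[of D]] by auto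

lemma idx_inj: "z \<in> LL D \<Longrightarrow> z' \<in> LL D \<Longrightarrow> idx D z = idx D z' \<Longrightarrow> z = z'"
  using enum_idx by metis

lemma kids_sub: "D \<in> Down \<Longrightarrow> z \<in> LL D \<Longrightarrow> kids D z \<subseteq> LL D"
  using kids_LL by (cases z) auto

lemma canon_is_tree:
  assumes D: "D \<in> Down"
  shows "is_tree {0..<card (LL D)} (idx D (rS, rT)) (\<lambda>i. idx D ` kids D (enum D i))"
proof -
  let ?N = "{0..<card (LL D)}" and ?ch = "\<lambda>i. idx D ` kids D (enum D i)"
  let ?R = "{(x, y). x \<in> ?N \<and> y \<in> ?ch x}"
  have reach: "(idx D (rS, rT), idx D z) \<in> ?R\<^sup>*" if "z \<in> LL D" for z
  proof -
    have "\<forall>z. dsum z = n \<longrightarrow> z \<in> LL D \<longrightarrow> (idx D (rS, rT), idx D z) \<in> ?R\<^sup>*" for n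
    proof (induction n rule: less_induct)
      case (less n)
      show ?case
      proof (intro allI impI)
        fix z assume zn: "dsum z = n" and zL: "z \<in> LL D"
        show "(idx D (rS, rT), idx D z) \<in> ?R\<^sup>*"
        proof (cases "z = (rS, rT)")
          case True then show ?thesis by simp
        next
          case False
          obtain a b where zab: "z = (a, b)" by fastforce
          obtain q where q: "q \<in> LL D" "z \<in> kids D q" "dsum q < dsum z"
            using LL_parent[OF D zL[unfolded zab]] False zab by auto
          have h1: "(idx D (rS, rT), idx D q) \<in> ?R\<^sup>*" using less[rule_format, of "dsum q" q] q zn by auto
          have h2: "(idx D q, idx D z) \<in> ?R" using q idx_in enum_idx by auto
          show ?thesis using rtrancl_into_rtrancl[OF h1 h2] .
        qed
      qed
    qed
    then show ?thesis using that by blast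
  qed
  show ?thesis unfolding is_tree_def
  proof (intro conjI ballI impI)
    show "finite ?N" by simp
    show "idx D (rS, rT) \<in> ?N" using idx_in root_LL by auto
  next
    fix e assume e: "e \<in> ?N"
    then have eL: "enum D e \<in> LL D" using enum_in by auto
    show "?ch e \<subseteq> ?N" using kids_sub[OF D eL] idx_in by auto
    show "idx D (rS, rT) \<notin> ?ch e"
    proof
      assume "idx D (rS, rT) \<in> ?ch e"
      then obtain k where k: "k \<in> kids D (enum D e)" "idx D (rS, rT) = idx D k" by auto
      have "k \<in> LL D" using kids_sub[OF D eL] k(1) by auto
      then have "k = (rS, rT)" using idx_inj[OF root_LL _ k(2)] by auto
      then show False using k root_not_kid eL by auto
    qed
    show "(idx D (rS, rT), e) \<in> ?R\<^sup>*" using reach[OF eL] idx_enum e by auto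
  next
    fix e assume e: "e \<in> ?N" and nr: "e \<noteq> idx D (rS, rT)"
    then have eL: "enum D e \<in> LL D" and ei: "idx D (enum D e) = e" using enum_in idx_enum by auto
    have zr: "enum D e \<noteq> (rS, rT)" using nr ei by auto
    obtain a b where zab: "enum D e = (a, b)" by fastforce
    obtain q where q: "q \<in> LL D" "enum D e \<in> kids D q"
      using LL_parent[OF D eL[unfolded zab]] zr zab by auto
    show "\<exists>!p. p \<in> ?N \<and> e \<in> ?ch p"
    proof (rule ex1I[where a = "idx D q"])
      have "idx D q \<in> ?N" using idx_in[OF q(1)] by simp
      moreover have "e \<in> ?ch (idx D q)" unfolding enum_idx[OF q(1)] using q(2) ei by (metis imageI)
      ultimately show "idx D q \<in> ?N \<and> e \<in> ?ch (idx D q)" by simp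
    next
      fix p assume p: "p \<in> ?N \<and> e \<in> ?ch p"
      then obtain k where k: "k \<in> kids D (enum D p)" "e = idx D k" by auto
      have pL: "enum D p \<in> LL D" using p enum_in by auto
      have kL: "k \<in> LL D" using kids_sub[OF D pL] k(1) by blast
      have "idx D k = idx D (enum D e)" using k(2) ei by simp
      then have "k = enum D e" using idx_inj[OF kL eL] by blast
      then have "enum D e \<in> kids D (enum D p)" using k(1) by simp
      then have "enum D p = q" using kid_uniq[OF D pL q(1) _ q(2)] by blast
      then show "p = idx D q" using idx_enum p by auto
    qed
  qed
qed

lemma leaf_LL: "a \<in> ES \<Longrightarrow> chS a = {} \<Longrightarrow> b \<in> ET \<Longrightarrow> chT b = {} \<Longrightarrow> (a, b) \<in> LL D"
proof -
  assume h: "a \<in> ES" "chS a = {}" "b \<in> ET" "chT b = {}"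
  then have "a \<notin> S.Inn" "b \<notin> T.Inn" unfolding S.Inn_def T.Inn_def by auto
  then have "CC D a b" unfolding CC_def by simp
  then show ?thesis using h unfolding LL_def by simp
qed

lemma canon_shuffle:
  assumes D: "D \<in> Down"
  shows "is_shuffle (ES, rS, chS) (ET, rT, chT) (canon D)"
proof -
  let ?N = "{0..<card (LL D)}" and ?ch = "\<lambda>i. idx D ` kids D (enum D i)"
  have bsub: "bij_betw (enum D) (idx D ` K) K" if K: "K \<subseteq> LL D" for K
  proof (rule bij_betw_subset[OF enum_bij])
    show "idx D ` K \<subseteq> ?N" using idx_in K by auto
    show "enum D ` idx D ` K = K"
    proof
      show "enum D ` idx D ` K \<subseteq> K" using enum_idx K by auto
      show "K \<subseteq> enum D ` idx D ` K"
      proof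
        fix z assume "z \<in> K"
        then have "z \<in> LL D" using K by blast
        then have "z = enum D (idx D z)" using enum_idx[of z D] by simp
        then show "z \<in> enum D ` idx D ` K" using \<open>z \<in> K\<close> by blast
      qed
    qed
  qed
  have lv: "{e \<in> ?N. ?ch e = {}} = idx D ` {z \<in> LL D. kids D z = {}}"
  proof
    show "{e \<in> ?N. ?ch e = {}} \<subseteq> idx D ` {z \<in> LL D. kids D z = {}}"
    proof
      fix e assume "e \<in> {e \<in> ?N. ?ch e = {}}"
      then have e: "e < card (LL D)" "kids D (enum D e) = {}" by auto
      then have "enum D e \<in> {z \<in> LL D. kids D z = {}}" using enum_in by auto
      moreover have "e = idx D (enum D e)" using idx_enum e by auto
      ultimately show "e \<in> idx D ` {z \<in> LL D. kids D z = {}}" by blast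
    qed
    show "idx D ` {z \<in> LL D. kids D z = {}} \<subseteq> {e \<in> ?N. ?ch e = {}}"
    proof
      fix e assume "e \<in> idx D ` {z \<in> LL D. kids D z = {}}"
      then obtain z where z: "z \<in> LL D" "kids D z = {}" "e = idx D z" by auto
      then have "enum D e = z" using enum_idx by auto
      then show "e \<in> {e \<in> ?N. ?ch e = {}}" using z idx_in by auto
    qed
  qed
  have lv2: "{z \<in> LL D. kids D z = {}} = {e \<in> ES. chS e = {}} \<times> {e \<in> ET. chT e = {}}"
  proof
    show "{z \<in> LL D. kids D z = {}} \<subseteq> {e \<in> ES. chS e = {}} \<times> {e \<in> ET. chT e = {}}"
    proof
      fix z assume "z \<in> {z \<in> LL D. kids D z = {}}"
      then have z: "z \<in> LL D" "fst z \<notin> S.Inn" "snd z \<notin> T.Inn" using kids_empty by auto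
      then have "z \<in> ES \<times> ET" using LL_sub by blast
      then show "z \<in> {e \<in> ES. chS e = {}} \<times> {e \<in> ET. chT e = {}}"
        using z(2,3) unfolding S.Inn_def T.Inn_def by (auto simp: mem_Times_iff)
    qed
    show "{e \<in> ES. chS e = {}} \<times> {e \<in> ET. chT e = {}} \<subseteq> {z \<in> LL D. kids D z = {}}"
    proof
      fix z assume "z \<in> {e \<in> ES. chS e = {}} \<times> {e \<in> ET. chT e = {}}"
      then obtain a b where z: "z = (a, b)" "a \<in> ES" "chS a = {}" "b \<in> ET" "chT b = {}" by auto
      then have "(a, b) \<in> LL D" using leaf_LL by blast
      moreover have "kids D (a, b) = {}" using z kids_empty unfolding S.Inn_def T.Inn_def by simp
      ultimately show "z \<in> {z \<in> LL D. kids D z = {}}" using z by simp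
    qed
  qed
  have tr: "tree (?N, idx D (rS, rT), ?ch)" using canon_is_tree[OF D] by (simp add: tree_def)
  show ?thesis unfolding is_shuffle_def Let_def canon_def ltree_simps tree_simps
  proof (intro conjI ballI impI)
    show "tree (?N, idx D (rS, rT), ?ch)" by (rule tr)
    show "enum D (idx D (rS, rT)) = (rS, rT)" using enum_idx root_LL by auto
    show "bij_betw (enum D) {e \<in> ?N. ?ch e = {}} ({e \<in> ES. chS e = {}} \<times> {e \<in> ET. chT e = {}})"
      unfolding lv lv2[symmetric] by (rule bsub) auto
  next
    fix e assume "e \<in> ?N"
    then show "enum D e \<in> ES \<times> ET" using enum_in LL_sub by auto
  next
    fix e assume e: "e \<in> ?N" and ne: "?ch e \<noteq> {}"
    have eL: "enum D e \<in> LL D" using e enum_in by auto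
    have K: "kids D (enum D e) \<subseteq> LL D" using kids_sub[OF D eL] .
    have "kids D (enum D e) = Sk (enum D e) \<or> kids D (enum D e) = Tk (enum D e)"
      using ne unfolding kids_def by (auto split: if_splits)
    then show "bij_betw (enum D) (?ch e) ((\<lambda>s'. (s', snd (enum D e))) ` chS (fst (enum D e))) \<or>
          bij_betw (enum D) (?ch e) ((\<lambda>t'. (fst (enum D e), t')) ` chT (snd (enum D e)))"
      using bsub[OF K] unfolding Sk_def Tk_def by auto
  qed
qed

end

context shuf
begin

definition Tv :: "('e \<times> 'f) ltree \<Rightarrow> nat \<Rightarrow> bool" where
  "Tv A e \<longleftrightarrow> above (ltree_tree A) e \<noteq> {} \<and>
     (\<forall>c\<in>above (ltree_tree A) e. fst (lab A c) = fst (lab A e))"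

definition DD :: "('e \<times> 'f) ltree \<Rightarrow> ('e \<times> 'f) set" where
  "DD A = {(a, b). a \<in> S.Inn \<and> b \<in> T.Inn \<and>
     (\<exists>e\<in>edges (ltree_tree A). snd (lab A e) = b \<and> S.le (fst (lab A e)) a \<and> Tv A e)}"

lemma Sk_fst: "k \<in> Sk z \<Longrightarrow> fst z \<in> ES \<Longrightarrow> fst k \<noteq> fst z"
  unfolding Sk_def using S.child_neq by auto

lemma Sk_ne: "fst z \<in> S.Inn \<Longrightarrow> Sk z \<noteq> {}" unfolding Sk_def S.Inn_def by auto
lemma Tk_ne: "snd z \<in> T.Inn \<Longrightarrow> Tk z \<noteq> {}" unfolding Tk_def T.Inn_def by auto

lemma canon_simps: "edges (ltree_tree (canon D)) = {0..<card (LL D)}" "lab (canon D) = enum D"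
  "root (ltree_tree (canon D)) = idx D (rS, rT)"
  "above (ltree_tree (canon D)) = (\<lambda>i. idx D ` kids D (enum D i))"
  unfolding canon_def by simp_all

lemma LL_fst: "z \<in> LL D \<Longrightarrow> fst z \<in> ES \<and> snd z \<in> ET"
  unfolding LL_def by (cases z) simp

lemma Tv_canon:
  assumes D: "D \<in> Down" and z: "z \<in> LL D"
  shows "Tv (canon D) (idx D z) \<longleftrightarrow> (kids D z \<noteq> {} \<and> (\<forall>k\<in>kids D z. fst k = fst z))"
proof -
  have K: "kids D z \<subseteq> LL D" using kids_sub[OF D z] .
  have ez: "enum D (idx D z) = z" using enum_idx[OF z] .
  have "Tv (canon D) (idx D z) \<longleftrightarrow> idx D ` kids D z \<noteq> {} \<and> (\<forall>c\<in>idx D ` kids D z. fst (enum D c) = fst z)"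
    unfolding Tv_def canon_def ltree_simps tree_simps ez by (rule refl)
  also have "\<dots> \<longleftrightarrow> kids D z \<noteq> {} \<and> (\<forall>k\<in>kids D z. fst (enum D (idx D k)) = fst z)" by simp
  also have "\<dots> \<longleftrightarrow> kids D z \<noteq> {} \<and> (\<forall>k\<in>kids D z. fst k = fst z)"
  proof -
    have "\<forall>k\<in>kids D z. enum D (idx D k) = k" using K enum_idx by blast
    then show ?thesis by auto
  qed
  finally show ?thesis .
qed

lemma kids_Tv_iff:
  assumes "z \<in> LL D"
  shows "(kids D z \<noteq> {} \<and> (\<forall>k\<in>kids D z. fst k = fst z)) \<longleftrightarrow> (\<not> Sst D z \<and> Tst D z)"
proof
  assume h: "kids D z \<noteq> {} \<and> (\<forall>k\<in>kids D z. fst k = fst z)"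
  have fz: "fst z \<in> ES" using LL_fst[OF assms] by simp
  show "\<not> Sst D z \<and> Tst D z"
  proof (cases "Sst D z")
    case True
    then have "kids D z = Sk z" unfolding kids_def by simp
    then obtain k where "k \<in> Sk z" "fst k = fst z" using h by auto
    then show ?thesis using Sk_fst fz by auto
  next
    case False
    then show ?thesis using h unfolding kids_def by (auto split: if_splits)
  qed
next
  assume h: "\<not> Sst D z \<and> Tst D z"
  then have "kids D z = Tk z" unfolding kids_def by simp
  moreover have "Tk z \<noteq> {}" using h Tk_ne unfolding Tst_def by auto
  ultimately show "kids D z \<noteq> {} \<and> (\<forall>k\<in>kids D z. fst k = fst z)" unfolding Tk_def by auto
qed

lemma DD_canon:
  assumes D: "D \<in> Down"
  shows "DD (canon D) = D"
proof
  show "DD (canon D) \<subseteq> D"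
  proof
    fix x assume "x \<in> DD (canon D)"
    then obtain a b i where x: "x = (a, b)" "a \<in> S.Inn" "b \<in> T.Inn" "i < card (LL D)"
      "snd (enum D i) = b" "S.le (fst (enum D i)) a" "Tv (canon D) i"
      unfolding DD_def canon_simps by auto
    have zL: "enum D i \<in> LL D" using enum_in x(4) .
    have "idx D (enum D i) = i" using idx_enum x(4) .
    then have "Tv (canon D) (idx D (enum D i))" using x(7) by simp
    then have "kids D (enum D i) \<noteq> {} \<and> (\<forall>k\<in>kids D (enum D i). fst k = fst (enum D i))"
      using Tv_canon[OF D zL] by blast
    then have tst: "Tst D (enum D i)" using kids_Tv_iff[OF zL] by blast
    have "fst (enum D i) = a \<or> S.lt (fst (enum D i)) a" using x(6) S.lt_def by auto
    then have "fst (enum D i) \<in> S.Inn" using x(2) S.lt_Int by auto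
    then have "enum D i \<in> D" using tst unfolding Tst_def by auto
    then have "(fst (enum D i), b) \<in> D" using x(5) by (metis prod.collapse)
    then show "x \<in> D" using Down_U[OF D _ x(6) x(2)] x(1) by auto
  qed
next
  show "D \<subseteq> DD (canon D)"
  proof
    fix x assume xD: "x \<in> D"
    obtain a b where x: "x = (a, b)" by fastforce
    have ab: "a \<in> S.Inn" "b \<in> T.Inn" using Down_sub[OF D] xD x by auto
    let ?P = "\<lambda>s. S.le s a \<and> (s, b) \<in> D"
    have "?P a" using xD x by simp
    then obtain s where s: "?P s" "\<forall>y. ?P y \<longrightarrow> S.depth s \<le> S.depth y"
      using ex_has_least_nat[of ?P a S.depth] by blast
    have sI: "s \<in> S.Inn" using s(1) Down_sub[OF D] by auto
    have sE: "s \<in> ES" and bE: "b \<in> ET" using sI ab Inn_E by auto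
    have aE: "a \<in> ES" using ab Inn_E by auto
    have "CC D s b" unfolding CC_def
    proof (intro conjI impI allI)
      fix b' assume "T.lt b' b" then show "(s, b') \<in> D" using Down_D[OF D] s(1) by auto
    next
      fix a' assume "S.lt a' s"
      show "(a', b) \<notin> D"
      proof
        assume "(a', b) \<in> D"
        moreover have "S.le a' a" using \<open>S.lt a' s\<close> s(1) S.lt_def S.le_trans by blast
        ultimately have "S.depth s \<le> S.depth a'" using s(2) by auto
        moreover have "S.depth a' < S.depth s" using S.depth_lt[OF \<open>S.lt a' s\<close> sE] .
        ultimately show False by simp
      qed
    qed
    then have zL: "(s, b) \<in> LL D" using sE bE unfolding LL_def by simp
    have "\<not> Sst D (s, b) \<and> Tst D (s, b)" using s(1) ab sI unfolding Sst_def Tst_def by auto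
    then have kT: "kids D (s, b) \<noteq> {} \<and> (\<forall>k\<in>kids D (s, b). fst k = s)" using kids_Tv_iff[OF zL] by simp
    have kk: "kids D (s, b) \<subseteq> LL D" using kids_sub[OF D zL] .
    let ?i = "idx D (s, b)"
    have ii: "?i < card (LL D)" "enum D ?i = (s, b)" using idx_in[OF zL] enum_idx[OF zL] by auto
    have "Tv (canon D) ?i" using Tv_canon[OF D zL] kT by simp
    then have "\<exists>e\<in>{0..<card (LL D)}. snd (enum D e) = b \<and> S.le (fst (enum D e)) a \<and> Tv (canon D) e"
      using ii s(1) by (intro bexI[where x="?i"]) auto
    then show "x \<in> DD (canon D)" unfolding DD_def canon_simps using ab x by auto
  qed
qed

end

locale shA = shuf ES rS chS ET rT chT + U: rtree EU rU chU
  for ES :: "'e set" and rS chS and ET :: "'f set" and rT chT and EU :: "nat set" and rU chU +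
  fixes l :: "nat \<Rightarrow> 'e \<times> 'f"
  assumes shA: "is_shuffle (ES, rS, chS) (ET, rT, chT) (EU, rU, chU, l)"
begin

lemma labE: "e \<in> EU \<Longrightarrow> l e \<in> ES \<times> ET"
  and lroot: "l rU = (rS, rT)"
  and lleaves: "bij_betw l {e \<in> EU. chU e = {}} ({e \<in> ES. chS e = {}} \<times> {e \<in> ET. chT e = {}})"
  and lvert: "e \<in> EU \<Longrightarrow> chU e \<noteq> {} \<Longrightarrow> bij_betw l (chU e) (Sk (l e)) \<or> bij_betw l (chU e) (Tk (l e))"
  using shA unfolding is_shuffle_def Let_def ltree_simps tree_simps Sk_def Tk_def by auto

lemma labE': "e \<in> EU \<Longrightarrow> fst (l e) \<in> ES" "e \<in> EU \<Longrightarrow> snd (l e) \<in> ET"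
  using labE by (auto simp: mem_Times_iff)

definition Svert where "Svert e \<longleftrightarrow> bij_betw l (chU e) (Sk (l e)) \<and> fst (l e) \<in> S.Inn"
definition Tvert where "Tvert e \<longleftrightarrow> bij_betw l (chU e) (Tk (l e)) \<and> snd (l e) \<in> T.Inn"

lemma vert: "e \<in> EU \<Longrightarrow> chU e \<noteq> {} \<Longrightarrow> Svert e \<or> Tvert e"
proof -
  assume e: "e \<in> EU" "chU e \<noteq> {}"
  from lvert[OF e] show ?thesis
  proof
    assume b: "bij_betw l (chU e) (Sk (l e))"
    then have "Sk (l e) \<noteq> {}" using e(2) bij_betw_empty2 by (metis bij_betw_imp_surj_on image_is_empty)
    then have "fst (l e) \<in> S.Inn" unfolding Sk_def S.Inn_def using labE'[OF e(1)] by auto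
    then show ?thesis using b unfolding Svert_def by auto
  next
    assume b: "bij_betw l (chU e) (Tk (l e))"
    then have "Tk (l e) \<noteq> {}" using e(2) by (metis bij_betw_imp_surj_on image_is_empty)
    then have "snd (l e) \<in> T.Inn" unfolding Tk_def T.Inn_def using labE'[OF e(1)] by auto
    then show ?thesis using b unfolding Tvert_def by auto
  qed
qed

lemma Svert_img: "Svert e \<Longrightarrow> l ` chU e = Sk (l e)" unfolding Svert_def bij_betw_def by auto
lemma Tvert_img: "Tvert e \<Longrightarrow> l ` chU e = Tk (l e)" unfolding Tvert_def bij_betw_def by auto

lemma child_lab: "e \<in> EU \<Longrightarrow> c \<in> chU e \<Longrightarrow> (Svert e \<and> l c \<in> Sk (l e)) \<or> (Tvert e \<and> l c \<in> Tk (l e))"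
proof -
  assume e: "e \<in> EU" "c \<in> chU e"
  then have "chU e \<noteq> {}" by auto
  then show ?thesis using vert[OF e(1)] Svert_img Tvert_img e(2) by blast
qed

lemma Tv_iff: "e \<in> EU \<Longrightarrow> Tv (EU, rU, chU, l) e \<longleftrightarrow> (chU e \<noteq> {} \<and> Tvert e)"
proof -
  assume e: "e \<in> EU"
  have TV: "Tv (EU, rU, chU, l) e \<longleftrightarrow> chU e \<noteq> {} \<and> (\<forall>c\<in>chU e. fst (l c) = fst (l e))"
    unfolding Tv_def by simp
  show ?thesis
  proof
    assume h: "Tv (EU, rU, chU, l) e"
    then have ne: "chU e \<noteq> {}" and fc: "\<forall>c\<in>chU e. fst (l c) = fst (l e)" using TV by auto
    then obtain c where c: "c \<in> chU e" by auto
    have "\<not> Svert e"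
    proof
      assume "Svert e"
      then have "l c \<in> Sk (l e)" using Svert_img c by auto
      then have "fst (l c) \<noteq> fst (l e)" using Sk_fst labE'(1)[OF e] by blast
      then show False using fc c by blast
    qed
    then show "chU e \<noteq> {} \<and> Tvert e" using vert[OF e ne] ne by auto
  next
    assume h: "chU e \<noteq> {} \<and> Tvert e"
    have "\<forall>c\<in>chU e. fst (l c) = fst (l e)"
    proof
      fix c assume "c \<in> chU e"
      then have "l c \<in> Tk (l e)" using Tvert_img h by blast
      then show "fst (l c) = fst (l e)" unfolding Tk_def by auto
    qed
    then show "Tv (EU, rU, chU, l) e" using TV h by auto
  qed
qed

lemma mono: "U.le e e' \<Longrightarrow> e \<in> EU \<Longrightarrow> S.le (fst (l e)) (fst (l e')) \<and> T.le (snd (l e)) (snd (l e'))"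
  unfolding U.le_def
proof (induction rule: rtrancl_induct)
  case base then show ?case by simp
next
  case (step y z)
  have y: "y \<in> EU" "z \<in> chU y" using step(2) unfolding U.R_def by auto
  have ih: "S.le (fst (l e)) (fst (l y)) \<and> T.le (snd (l e)) (snd (l y))" using step by auto
  from child_lab[OF y] show ?case
  proof
    assume "Svert y \<and> l z \<in> Sk (l y)"
    then have "snd (l z) = snd (l y)" "fst (l z) \<in> chS (fst (l y))" unfolding Sk_def by auto
    then show ?thesis using ih S.le_trans S.child_le[OF labE'(1)[OF y(1)]] by auto
  next
    assume "Tvert y \<and> l z \<in> Tk (l y)"
    then have "fst (l z) = fst (l y)" "snd (l z) \<in> chT (snd (l y))" unfolding Tk_def by auto
    then show ?thesis using ih T.le_trans T.child_le[OF labE'(2)[OF y(1)]] by auto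
  qed
qed


lemma child_lab2: "e \<in> EU \<Longrightarrow> c \<in> chU e \<Longrightarrow> l c \<in> Sk (l e) \<union> Tk (l e)"
  using child_lab by blast

lemma strict: assumes e: "e \<in> EU" and le: "U.le e e'" and ne: "e \<noteq> e'" shows "l e \<noteq> l e'"
proof
  assume eq: "l e = l e'"
  obtain c where c: "c \<in> chU e" "U.le c e'" using U.lt_child[of e e'] le ne U.lt_def by auto
  have cE: "c \<in> EU" using U.chE' e c(1) .
  have m: "S.le (fst (l c)) (fst (l e')) \<and> T.le (snd (l c)) (snd (l e'))" using mono[OF c(2) cE] .
  have fe: "fst (l e) \<in> ES" "snd (l e) \<in> ET" using labE'[OF e] by auto
  from child_lab2[OF e c(1)] show False
  proof
    assume "l c \<in> Sk (l e)"
    then have h: "fst (l c) \<in> chS (fst (l e))" unfolding Sk_def by auto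
    then have "S.le (fst (l c)) (fst (l e))" using m eq by simp
    then show False using S.not_le_child[OF fe(1) h] by simp
  next
    assume "l c \<in> Tk (l e)"
    then have h: "snd (l c) \<in> chT (snd (l e))" unfolding Tk_def by auto
    then have "T.le (snd (l c)) (snd (l e))" using m eq by simp
    then show False using T.not_le_child[OF fe(2) h] by simp
  qed
qed

lemma leaf_lab: "e \<in> EU \<Longrightarrow> chU e = {} \<Longrightarrow> chS (fst (l e)) = {} \<and> chT (snd (l e)) = {}"
proof -
  assume "e \<in> EU" "chU e = {}"
  then have "e \<in> {e \<in> EU. chU e = {}}" by simp
  then have "l e \<in> {e \<in> ES. chS e = {}} \<times> {e \<in> ET. chT e = {}}" using bij_betwE[OF lleaves] by blast
  then show ?thesis by (auto simp: mem_Times_iff)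
qed

lemma leaf_exists:
  assumes "e \<in> EU" "S.le (fst (l e)) ls" "chS ls = {}" "T.le (snd (l e)) lt" "chT lt = {}"
    "ls \<in> ES" "lt \<in> ET"
  shows "\<exists>x\<in>EU. U.le e x \<and> chU x = {} \<and> l x = (ls, lt)"
proof -
  have "\<forall>e. e \<in> EU \<longrightarrow> S.le (fst (l e)) ls \<longrightarrow> T.le (snd (l e)) lt \<longrightarrow>
      (S.depth ls - S.depth (fst (l e))) + (T.depth lt - T.depth (snd (l e))) = n \<longrightarrow>
      (\<exists>x\<in>EU. U.le e x \<and> chU x = {} \<and> l x = (ls, lt))" for n
  proof (induction n rule: less_induct)
    case (less n)
    show ?case
    proof (intro allI impI)
      fix e assume e: "e \<in> EU" and les: "S.le (fst (l e)) ls" and let': "T.le (snd (l e)) lt"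
        and n: "(S.depth ls - S.depth (fst (l e))) + (T.depth lt - T.depth (snd (l e))) = n"
      show "\<exists>x\<in>EU. U.le e x \<and> chU x = {} \<and> l x = (ls, lt)"
      proof (cases "chU e = {}")
        case True
        then have "chS (fst (l e)) = {}" "chT (snd (l e)) = {}" using leaf_lab e by auto
        then have "fst (l e) = ls" "snd (l e) = lt" using S.leaf_eq les T.leaf_eq let' by auto
        then have le: "l e = (ls, lt)" by (metis prod.collapse)
        show ?thesis
        proof (rule bexI[of _ e])
          show "U.le e e \<and> chU e = {} \<and> l e = (ls, lt)" using le True by simp
        qed (rule e)
      next
        case False
        have fe: "fst (l e) \<in> ES" "snd (l e) \<in> ET" using labE'[OF e] by auto
        from vert[OF e False] show ?thesis
        proof
          assume sv: "Svert e"
          then have "fst (l e) \<in> S.Inn" unfolding Svert_def by simp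
          then have "fst (l e) \<noteq> ls" using assms(3) unfolding S.Inn_def by auto
          then obtain si where si: "si \<in> chS (fst (l e))" "S.le si ls"
            using S.lt_child[of "fst (l e)" ls] les S.lt_def by auto
          have "(si, snd (l e)) \<in> Sk (l e)" using si unfolding Sk_def by auto
          then obtain c where c: "c \<in> chU e" "l c = (si, snd (l e))"
            using sv unfolding Svert_def bij_betw_def by (metis imageE)
          have cE: "c \<in> EU" using U.chE' e c(1) .
          have d1: "S.depth (fst (l e)) < S.depth si" using S.depth_lt[OF S.child_lt[OF fe(1) si(1)]] S.chE' fe(1) si(1) by auto
          have d2: "S.depth si \<le> S.depth ls" using S.depth_le[OF si(2) assms(6)] .
          have "(S.depth ls - S.depth (fst (l c))) + (T.depth lt - T.depth (snd (l c))) < n"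
            using n d1 d2 c(2) by auto
          then obtain x where x: "x \<in> EU" "U.le c x" "chU x = {}" "l x = (ls, lt)"
            using less[rule_format, OF _ cE] c(2) si(2) let' by auto
          have "U.le e x" using U.le_trans[OF U.child_le[OF e c(1)] x(2)] .
          then show ?thesis using x by auto
        next
          assume tv: "Tvert e"
          then have "snd (l e) \<in> T.Inn" unfolding Tvert_def by simp
          then have "snd (l e) \<noteq> lt" using assms(5) unfolding T.Inn_def by auto
          then obtain ti where ti: "ti \<in> chT (snd (l e))" "T.le ti lt"
            using T.lt_child[of "snd (l e)" lt] let' T.lt_def by auto
          have "(fst (l e), ti) \<in> Tk (l e)" using ti unfolding Tk_def by auto
          then obtain c where c: "c \<in> chU e" "l c = (fst (l e), ti)"
            using tv unfolding Tvert_def bij_betw_def by (metis imageE)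
          have cE: "c \<in> EU" using U.chE' e c(1) .
          have d1: "T.depth (snd (l e)) < T.depth ti" using T.depth_lt[OF T.child_lt[OF fe(2) ti(1)]] T.chE' fe(2) ti(1) by auto
          have d2: "T.depth ti \<le> T.depth lt" using T.depth_le[OF ti(2) assms(7)] .
          have "(S.depth ls - S.depth (fst (l c))) + (T.depth lt - T.depth (snd (l c))) < n"
            using n d1 d2 c(2) by auto
          then obtain x where x: "x \<in> EU" "U.le c x" "chU x = {}" "l x = (ls, lt)"
            using less[rule_format, OF _ cE] c(2) ti(2) les by auto
          have "U.le e x" using U.le_trans[OF U.child_le[OF e c(1)] x(2)] .
          then show ?thesis using x by auto
        qed
      qed
    qed
  qed
  then show ?thesis using assms by blast
qed

lemma linj: "inj_on l EU"
proof (rule inj_onI)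
  fix e1 e2 assume e: "e1 \<in> EU" "e2 \<in> EU" and eq: "l e1 = l e2"
  have fe: "fst (l e1) \<in> ES" "snd (l e1) \<in> ET" using labE'[OF e(1)] by auto
  obtain ls where ls: "S.le (fst (l e1)) ls" "ls \<in> ES" "chS ls = {}" using S.leaf_above[OF fe(1)] by auto
  obtain lt where lt: "T.le (snd (l e1)) lt" "lt \<in> ET" "chT lt = {}" using T.leaf_above[OF fe(2)] by auto
  obtain x1 where x1: "x1 \<in> EU" "U.le e1 x1" "chU x1 = {}" "l x1 = (ls, lt)"
    using leaf_exists[OF e(1) ls(1) ls(3) lt(1) lt(3) ls(2) lt(2)] by auto
  obtain x2 where x2: "x2 \<in> EU" "U.le e2 x2" "chU x2 = {}" "l x2 = (ls, lt)"
    using leaf_exists[OF e(2) _ ls(3) _ lt(3) ls(2) lt(2)] ls(1) lt(1) eq by auto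
  have "inj_on l {e \<in> EU. chU e = {}}" using lleaves unfolding bij_betw_def by simp
  then have "x1 = x2" using inj_onD[of l _ x1 x2] x1 x2 by simp
  then have "U.le e1 e2 \<or> U.le e2 e1" using U.comparable[OF x1(2) _ x1(1)] x2(2) by auto
  then show "e1 = e2" using strict e eq by metis
qed

lemma Tpath:
  assumes e: "e \<in> EU" and lt: "T.lt t' (snd (l e))"
  shows "\<exists>x\<in>EU. U.le x e \<and> snd (l x) = t' \<and> Tv (EU, rU, chU, l) x"
proof -
  have "(rU, e) \<in> U.R\<^sup>*" using U.reach e .
  then show ?thesis using lt e
  proof (induction arbitrary: t' rule: rtrancl_induct)
    case base
    then show ?case using lroot T.le_r T.lt_def by auto
  next
    case (step y z)
    have y: "y \<in> EU" "z \<in> chU y" using step(2) unfolding U.R_def by auto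
    from child_lab[OF y] show ?case
    proof
      assume "Svert y \<and> l z \<in> Sk (l y)"
      then have "snd (l z) = snd (l y)" unfolding Sk_def by auto
      then obtain x where "x \<in> EU" "U.le x y" "snd (l x) = t'" "Tv (EU, rU, chU, l) x"
        using step(3)[of t'] step(4) y(1) by auto
      then show ?thesis using U.le_trans[OF _ U.child_le[OF y]] by blast
    next
      assume tv: "Tvert y \<and> l z \<in> Tk (l y)"
      then have h: "snd (l z) \<in> chT (snd (l y))" unfolding Tk_def by auto
      have "t' = snd (l z) \<or> T.le t' (snd (l y))" using T.le_child_cases[OF _ h labE'(2)[OF y(1)]] step(4) T.lt_def by auto
      then have "t' = snd (l y) \<or> T.lt t' (snd (l y))" using step(4) T.lt_def by auto
      then show ?thesis
      proof
        assume "t' = snd (l y)"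
        moreover have "Tv (EU, rU, chU, l) y" using Tv_iff[OF y(1)] tv y(2) by auto
        ultimately show ?thesis using y U.child_le[OF y] by auto
      next
        assume "T.lt t' (snd (l y))"
        then obtain x where "x \<in> EU" "U.le x y" "snd (l x) = t'" "Tv (EU, rU, chU, l) x"
          using step(3)[of t'] y(1) by auto
        then show ?thesis using U.le_trans[OF _ U.child_le[OF y]] by blast
      qed
    qed
  qed
qed

abbreviation "DA \<equiv> DD (EU, rU, chU, l)"

lemma DA_def: "DA = {(a, b). a \<in> S.Inn \<and> b \<in> T.Inn \<and>
     (\<exists>e\<in>EU. snd (l e) = b \<and> S.le (fst (l e)) a \<and> Tv (EU, rU, chU, l) e)}"
  unfolding DD_def by simp

lemma DA_Down: "DA \<in> Down"
  unfolding Down_def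
proof (intro CollectI conjI allI impI)
  show "DA \<subseteq> S.Inn \<times> T.Inn" unfolding DA_def by auto
next
  fix a b assume "(a, b) \<in> DA"
  then obtain e where e: "a \<in> S.Inn" "b \<in> T.Inn" "e \<in> EU" "snd (l e) = b" "S.le (fst (l e)) a" "Tv (EU, rU, chU, l) e"
    unfolding DA_def by auto
  {
    fix b' assume lt: "T.lt b' b"
    then obtain x where x: "x \<in> EU" "U.le x e" "snd (l x) = b'" "Tv (EU, rU, chU, l) x"
      using Tpath[OF e(3)] e(4) by auto
    have "S.le (fst (l x)) a" using mono[OF x(2) x(1)] e(5) S.le_trans by blast
    moreover have "b' \<in> T.Inn" using T.lt_Int lt .
    ultimately show "(a, b') \<in> DA" unfolding DA_def using x e(1) by auto
  }
  {
    fix a' assume "S.le a a'" "a' \<in> S.Inn"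
    then show "(a', b) \<in> DA" unfolding DA_def using e S.le_trans by blast
  }
qed

end

context shA
begin

lemma kids_char:
  assumes e: "e \<in> EU"
  shows "l ` chU e = kids DA (l e)"
proof -
  obtain s t where st: "l e = (s, t)" by fastforce
  have fe: "s \<in> ES" "t \<in> ET" using labE'[OF e] st by auto
  show ?thesis
  proof (cases "chU e = {}")
    case True
    then have "chS s = {}" "chT t = {}" using leaf_lab[OF e] st by auto
    then have "kids DA (l e) = {}" using kids_empty st unfolding S.Inn_def T.Inn_def by simp
    then show ?thesis using True by simp
  next
    case ne: False
    from vert[OF e ne] show ?thesis
    proof
      assume sv: "Svert e"
      have sI: "s \<in> S.Inn" using sv st unfolding Svert_def by simp
      have "t \<notin> T.Inn \<or> (s, t) \<notin> DA"
      proof (rule ccontr)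
        assume "\<not> (t \<notin> T.Inn \<or> (s, t) \<notin> DA)"
        then have tI: "t \<in> T.Inn" and "(s, t) \<in> DA" by auto
        then obtain e' where e': "e' \<in> EU" "snd (l e') = t" "S.le (fst (l e')) s" "Tv (EU, rU, chU, l) e'"
          unfolding DA_def by auto
        have fe': "fst (l e') \<in> ES" using labE'[OF e'(1)] by auto
        obtain si where si: "si \<in> chS s" using sI unfolding S.Inn_def by auto
        have siE: "si \<in> ES" using S.chE' fe(1) si .
        obtain ls where ls: "S.le si ls" "ls \<in> ES" "chS ls = {}" using S.leaf_above[OF siE] by auto
        obtain lt where lt: "T.le t lt" "lt \<in> ET" "chT lt = {}" using T.leaf_above[OF fe(2)] by auto
        have sls: "S.le s ls" using S.le_trans[OF S.child_le[OF fe(1) si] ls(1)] .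
        obtain x1 where x1: "x1 \<in> EU" "U.le e x1" "chU x1 = {}" "l x1 = (ls, lt)"
          using leaf_exists[OF e _ ls(3) _ lt(3) ls(2) lt(2)] st sls lt(1) by auto
        obtain x2 where x2: "x2 \<in> EU" "U.le e' x2" "chU x2 = {}" "l x2 = (ls, lt)"
          using leaf_exists[OF e'(1) _ ls(3) _ lt(3) ls(2) lt(2)] e'(2,3) sls lt(1) S.le_trans by auto
        have "x1 = x2" using inj_onD[OF linj, of x1 x2] x1 x2 by simp
        then have "U.le e e' \<or> U.le e' e" using U.comparable[OF x1(2) _ x1(1)] x2(2) by auto
        then show False
        proof
          assume "U.le e e'"
          then have "S.le s (fst (l e'))" "T.le t (snd (l e'))" using mono[OF _ e] st by auto
          then have "fst (l e') = s" using S.antisym e'(3) by auto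
          then have "l e' = l e" using e'(2) st by (metis prod.collapse)
          then have "e' = e" using inj_onD[OF linj] e e'(1) by blast
          then have "Tvert e" using Tv_iff[OF e] e'(4) by auto
          moreover obtain c where c: "c \<in> chU e" using ne by auto
          ultimately have "l c \<in> Tk (l e)" "l c \<in> Sk (l e)" using Tvert_img Svert_img[OF sv] by blast+
          then show False using Sk_fst[of "l c" "l e"] fe st unfolding Tk_def by auto
        next
          assume le: "U.le e' e"
          have "e' \<noteq> e"
          proof
            assume "e' = e"
            then have "Tvert e" using Tv_iff[OF e] e'(4) by auto
            moreover obtain c where c: "c \<in> chU e" using ne by auto
            ultimately have "l c \<in> Tk (l e)" "l c \<in> Sk (l e)" using Tvert_img Svert_img[OF sv] by blast+
            then show False using Sk_fst[of "l c" "l e"] fe st unfolding Tk_def by auto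
          qed
          then obtain c where c: "c \<in> chU e'" "U.le c e" using U.lt_child[of e' e] le U.lt_def by auto
          have "Tvert e'" using Tv_iff[OF e'(1)] e'(4) by auto
          then have "l c \<in> Tk (l e')" using Tvert_img c(1) by auto
          then have h: "snd (l c) \<in> chT t" using e'(2) unfolding Tk_def by auto
          have "T.le (snd (l c)) t" using mono[OF c(2) U.chE'[OF e'(1) c(1)]] st by auto
          then show False using T.not_le_child[OF fe(2) h] by simp
        qed
      qed
      then have "Sst DA (l e)" using sI st unfolding Sst_def by simp
      then have "kids DA (l e) = Sk (l e)" unfolding kids_def by simp
      then show ?thesis using Svert_img[OF sv] by simp
    next
      assume tv: "Tvert e"
      have tI: "t \<in> T.Inn" using tv st unfolding Tvert_def by simp
      have "Tv (EU, rU, chU, l) e" using Tv_iff[OF e] tv ne by simp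
      then have "s \<in> S.Inn \<Longrightarrow> (s, t) \<in> DA" unfolding DA_def using e st tI by force
      then have "\<not> Sst DA (l e) \<and> Tst DA (l e)" using tI st unfolding Sst_def Tst_def by auto
      then have "kids DA (l e) = Tk (l e)" unfolding kids_def by simp
      then show ?thesis using Tvert_img[OF tv] by simp
    qed
  qed
qed

lemma img_LL: "l ` EU = LL DA"
proof
  show "l ` EU \<subseteq> LL DA"
  proof
    fix z assume "z \<in> l ` EU"
    then obtain e where e: "e \<in> EU" "z = l e" by auto
    have "(rU, e) \<in> U.R\<^sup>*" using U.reach e(1) .
    then have "l e \<in> LL DA" using e(1)
    proof (induction rule: rtrancl_induct)
      case base then show ?case using lroot root_LL by simp
    next
      case (step y z)
      have y: "y \<in> EU" "z \<in> chU y" using step(2) unfolding U.R_def by auto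
      have "l z \<in> kids DA (l y)" using kids_char[OF y(1)] y(2) by blast
      then show ?case using kids_sub[OF DA_Down step(3)[OF y(1)]] by blast
    qed
    then show "z \<in> LL DA" using e by simp
  qed
next
  show "LL DA \<subseteq> l ` EU"
  proof
    fix z assume z: "z \<in> LL DA"
    have "\<forall>z. dsum z = n \<longrightarrow> z \<in> LL DA \<longrightarrow> z \<in> l ` EU" for n
    proof (induction n rule: less_induct)
      case (less n)
      show ?case
      proof (intro allI impI)
        fix z assume zn: "dsum z = n" and zL: "z \<in> LL DA"
        show "z \<in> l ` EU"
        proof (cases "z = (rS, rT)")
          case True then show ?thesis using lroot U.rE by force
        next
          case False
          obtain a b where zab: "z = (a, b)" by fastforce
          obtain q where q: "q \<in> LL DA" "z \<in> kids DA q" "dsum q < dsum z"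
            using LL_parent[OF DA_Down zL[unfolded zab]] False zab by auto
          have "q \<in> l ` EU" using less[rule_format, of "dsum q" q] q zn by auto
          then obtain e where e: "e \<in> EU" "q = l e" by auto
          then have "z \<in> l ` chU e" using kids_char[OF e(1)] q(2) by simp
          then show ?thesis using U.chE[OF e(1)] by blast
        qed
      qed
    qed
    then show "z \<in> l ` EU" using z by blast
  qed
qed

lemma iso_canon: "ltree_iso (EU, rU, chU, l) (canon DA)"
  unfolding ltree_iso_def ltree_simps tree_simps canon_simps
proof (intro exI[of _ "idx DA \<circ> l"] conjI ballI)
  have b1: "bij_betw l EU (LL DA)" using linj img_LL unfolding bij_betw_def by simp
  show "bij_betw (idx DA \<circ> l) EU {0..<card (LL DA)}" using bij_betw_trans[OF b1 idx_bij] .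
  show "(idx DA \<circ> l) rU = idx DA (rS, rT)" using lroot by simp
next
  fix e assume e: "e \<in> EU"
  have lL: "l e \<in> LL DA" using img_LL e by blast
  have "enum DA ((idx DA \<circ> l) e) = l e" using enum_idx[OF lL] by simp
  then have "idx DA ` kids DA (enum DA ((idx DA \<circ> l) e)) = idx DA ` l ` chU e"
    using kids_char[OF e] by simp
  then show "idx DA ` kids DA (enum DA ((idx DA \<circ> l) e)) = (idx DA \<circ> l) ` chU e"
    by (simp add: image_comp)
  show "enum DA ((idx DA \<circ> l) e) = l e" using enum_idx[OF lL] by simp
qed

end

lemma iso_trans: "ltree_iso A B \<Longrightarrow> ltree_iso B C \<Longrightarrow> ltree_iso A C"
proof -
  assume "ltree_iso A B" "ltree_iso B C"
  then obtain f g where f: "bij_betw f (edges (ltree_tree A)) (edges (ltree_tree B))"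
    "f (root (ltree_tree A)) = root (ltree_tree B)"
    "\<forall>e\<in>edges (ltree_tree A). above (ltree_tree B) (f e) = f ` above (ltree_tree A) e \<and> lab B (f e) = lab A e"
    and g: "bij_betw g (edges (ltree_tree B)) (edges (ltree_tree C))"
    "g (root (ltree_tree B)) = root (ltree_tree C)"
    "\<forall>e\<in>edges (ltree_tree B). above (ltree_tree C) (g e) = g ` above (ltree_tree B) e \<and> lab C (g e) = lab B e"
    unfolding ltree_iso_def by blast
  show "ltree_iso A C" unfolding ltree_iso_def
  proof (intro exI[of _ "g \<circ> f"] conjI ballI)
    show "bij_betw (g \<circ> f) (edges (ltree_tree A)) (edges (ltree_tree C))" using bij_betw_trans[OF f(1) g(1)] .
    show "(g \<circ> f) (root (ltree_tree A)) = root (ltree_tree C)" using f(2) g(2) by simp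
  next
    fix e assume e: "e \<in> edges (ltree_tree A)"
    then have fe: "f e \<in> edges (ltree_tree B)" using bij_betwE[OF f(1)] by blast
    show "above (ltree_tree C) ((g \<circ> f) e) = (g \<circ> f) ` above (ltree_tree A) e"
      using f(3) g(3) e fe by (simp add: image_comp)
    show "lab C ((g \<circ> f) e) = lab A e" using f(3) g(3) e fe by simp
  qed
qed

lemma tree_above_sub: "tree U \<Longrightarrow> e \<in> edges U \<Longrightarrow> above U e \<subseteq> edges U"
  by (cases U) (auto simp: tree_def is_tree_def)

lemma tree_root_in: "tree U \<Longrightarrow> root U \<in> edges U"
  by (cases U) (auto simp: tree_def is_tree_def)

lemma iso_sym: "tree (ltree_tree A) \<Longrightarrow> ltree_iso A B \<Longrightarrow> ltree_iso B A"
proof -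
  assume tA: "tree (ltree_tree A)" and "ltree_iso A B"
  then obtain f where f: "bij_betw f (edges (ltree_tree A)) (edges (ltree_tree B))"
    "f (root (ltree_tree A)) = root (ltree_tree B)"
    "\<forall>e\<in>edges (ltree_tree A). above (ltree_tree B) (f e) = f ` above (ltree_tree A) e \<and> lab B (f e) = lab A e"
    unfolding ltree_iso_def by blast
  let ?g = "inv_into (edges (ltree_tree A)) f"
  have inj: "inj_on f (edges (ltree_tree A))" using f(1) unfolding bij_betw_def by simp
  show "ltree_iso B A" unfolding ltree_iso_def
  proof (intro exI[of _ ?g] conjI ballI)
    show "bij_betw ?g (edges (ltree_tree B)) (edges (ltree_tree A))" using bij_betw_inv_into[OF f(1)] .
    show "?g (root (ltree_tree B)) = root (ltree_tree A)"
      using f(2) inv_into_f_f[OF inj tree_root_in[OF tA]] by simp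
  next
    fix e' assume e': "e' \<in> edges (ltree_tree B)"
    then obtain e where e: "e \<in> edges (ltree_tree A)" "e' = f e" using f(1) unfolding bij_betw_def by auto
    have ge: "?g e' = e" using e inv_into_f_f[OF inj] by simp
    have sub: "above (ltree_tree A) e \<subseteq> edges (ltree_tree A)" using tree_above_sub[OF tA e(1)] .
    have "?g ` above (ltree_tree B) e' = ?g ` f ` above (ltree_tree A) e" using f(3) e by simp
    also have "\<dots> = above (ltree_tree A) e" using inv_into_image_cancel[OF inj sub] .
    finally show "above (ltree_tree A) (?g e') = ?g ` above (ltree_tree B) e'" using ge by simp
    show "lab A (?g e') = lab B e'" using ge f(3) e by simp
  qed
qed

context shuf
begin

abbreviation "SS \<equiv> (ES, rS, chS)"
abbreviation "TT \<equiv> (ET, rT, chT)"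

lemma shuffle_shA:
  assumes "is_shuffle SS TT (EU, rU, chU, l)"
  shows "shA ES rS chS ET rT chT EU rU chU l"
proof -
  have "tree (EU, rU, chU)" using assms unfolding is_shuffle_def Let_def by simp
  then have "is_tree EU rU chU" unfolding tree_def by simp
  then have "rtree EU rU chU" unfolding rtree_def .
  then show ?thesis unfolding shA_def shA_axioms_def shuf_def using assms S.rtree_axioms T.rtree_axioms by simp
qed

lemma shuffle_canon:
  assumes A: "is_shuffle SS TT A"
  shows "ltree_iso A (canon (DD A)) \<and> DD A \<in> Down"
proof -
  obtain EU rU chU l where Ae: "A = (EU, rU, chU, l)" by (cases A) auto
  interpret X: shA ES rS chS ET rT chT EU rU chU l using shuffle_shA A Ae by simp
  show ?thesis using X.iso_canon X.DA_Down Ae by simp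
qed

lemma shuffle_tree: "is_shuffle SS TT A \<Longrightarrow> tree (ltree_tree A)"
  unfolding is_shuffle_def Let_def by simp

lemma iso_DD_sub:
  assumes tA: "tree (ltree_tree A)" and iso: "ltree_iso A B"
  shows "DD A \<subseteq> DD B"
proof
  obtain f where f: "bij_betw f (edges (ltree_tree A)) (edges (ltree_tree B))"
    "\<forall>e\<in>edges (ltree_tree A). above (ltree_tree B) (f e) = f ` above (ltree_tree A) e \<and> lab B (f e) = lab A e"
    using iso unfolding ltree_iso_def by blast
  fix x assume "x \<in> DD A"
  then obtain a b e where x: "x = (a, b)" "a \<in> S.Inn" "b \<in> T.Inn" "e \<in> edges (ltree_tree A)"
    "snd (lab A e) = b" "S.le (fst (lab A e)) a" "Tv A e" unfolding DD_def by auto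
  have fe: "f e \<in> edges (ltree_tree B)" using bij_betwE[OF f(1)] x(4) by blast
  have sub: "above (ltree_tree A) e \<subseteq> edges (ltree_tree A)" using tree_above_sub[OF tA x(4)] .
  have "Tv B (f e)" unfolding Tv_def
  proof (intro conjI ballI)
    show "above (ltree_tree B) (f e) \<noteq> {}" using f(2) x(4,7) unfolding Tv_def by simp
  next
    fix c' assume "c' \<in> above (ltree_tree B) (f e)"
    then obtain c where c: "c \<in> above (ltree_tree A) e" "c' = f c" using f(2) x(4) by auto
    have "lab B (f c) = lab A c" using f(2) c(1) sub by auto
    then show "fst (lab B c') = fst (lab B (f e))" using c x(7) f(2) x(4) unfolding Tv_def by auto
  qed
  moreover have lb: "lab B (f e) = lab A e" using f(2) x(4) by simp
  ultimately have "\<exists>e'\<in>edges (ltree_tree B). snd (lab B e') = b \<and> S.le (fst (lab B e')) a \<and> Tv B e'"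
    using fe x(5,6) by (intro bexI[of _ "f e"]) auto
  then show "x \<in> DD B" unfolding DD_def using x by auto
qed

lemma iso_DD: "is_shuffle SS TT A \<Longrightarrow> is_shuffle SS TT B \<Longrightarrow> ltree_iso A B \<Longrightarrow> DD A = DD B"
  using iso_DD_sub iso_sym shuffle_tree by (metis subset_antisym)

lemma perc_DD:
  assumes ps: "perc_step SS TT A B"
  shows "DD A \<subseteq> DD B"
proof -
  obtain EA rA chA lA where Ae: "A = (EA, rA, chA, lA)" by (cases A) auto
  obtain EB rB chB lB where Be: "B = (EB, rB, chB, lB)" by (cases B) auto
  have shA': "is_shuffle SS TT A" using ps unfolding perc_step_def by simp
  interpret X: shA ES rS chS ET rT chT EA rA chA lA using shuffle_shA shA' Ae by simp
  obtain a X Y \<phi> s t where P: "a \<in> EA" "lA a = (s, t)" "chA a = X" "chS s \<noteq> {}" "chT t \<noteq> {}"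
    "bij_betw lA X ((\<lambda>s'. (s', t)) ` chS s)"
    "Y \<subseteq> EB" "bij_betw \<phi> (EA - X) (EB - Y)"
    "\<forall>e\<in>EA - X. lB (\<phi> e) = lA e"
    "\<forall>e\<in>EA - X - {a}. chB (\<phi> e) = \<phi> ` chA e"
    "chB (\<phi> a) = Y"
    "bij_betw lB Y ((\<lambda>t'. (s, t')) ` chT t)"
  proof -
    from ps have "\<exists>a X Y \<phi> s t. a \<in> EA \<and> lA a = (s, t) \<and> chA a = X \<and> chS s \<noteq> {} \<and> chT t \<noteq> {} \<and>
        bij_betw lA X ((\<lambda>s'. (s', t)) ` chS s) \<and>
        (\<forall>x\<in>X. bij_betw lA (chA x) ((\<lambda>t'. (fst (lA x), t')) ` chT t)) \<and>
        Y \<subseteq> EB \<and> bij_betw \<phi> (EA - X) (EB - Y) \<and> \<phi> rA = rB \<and>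
        (\<forall>e\<in>EA - X. lB (\<phi> e) = lA e) \<and>
        (\<forall>e\<in>EA - X - {a}. chB (\<phi> e) = \<phi> ` chA e) \<and>
        chB (\<phi> a) = Y \<and> bij_betw lB Y ((\<lambda>t'. (s, t')) ` chT t) \<and>
        (\<forall>y\<in>Y. chB y = \<phi> ` {e. \<exists>x\<in>X. e \<in> chA x \<and> snd (lA e) = snd (lB y)})"
      unfolding perc_step_def Let_def Ae Be ltree_simps tree_simps by simp
    then show ?thesis by (elim exE conjE) (rule that)
  qed
  have aX: "a \<notin> X" using P(3) X.U.child_neq[OF P(1)] by auto
  have sE: "s \<in> ES" using X.labE'[OF P(1)] P(2) by simp
  have Xne: "X \<noteq> {}" using P(6) P(4) by (metis bij_betw_imp_surj_on image_is_empty)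
  have Yne: "Y \<noteq> {}" using P(12) P(5) by (metis bij_betw_imp_surj_on image_is_empty)
  have pa: "\<phi> a \<in> EB" using bij_betwE[OF P(8)] P(1) aX by blast
  show ?thesis
  proof
    fix x assume "x \<in> DD A"
    then obtain x1 b e where x: "x = (x1, b)" "x1 \<in> S.Inn" "b \<in> T.Inn" "e \<in> EA"
      "snd (lA e) = b" "S.le (fst (lA e)) x1" "Tv A e" unfolding DD_def Ae ltree_simps tree_simps by auto
    have tv: "chA e \<noteq> {}" "\<forall>c\<in>chA e. fst (lA c) = fst (lA e)" using x(7) unfolding Tv_def Ae by auto
    have wit: "x \<in> DD B" if w: "w \<in> EB" "snd (lB w) = b" "S.le (fst (lB w)) x1" "Tv B w" for w
      unfolding DD_def Be ltree_simps tree_simps using w x Be by auto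
    consider "e \<in> X" | "e = a" | "e \<in> EA - X - {a}" using x(4) by blast
    then show "x \<in> DD B"
    proof cases
      case 1
      then obtain si where si: "si \<in> chS s" "lA e = (si, t)" using bij_betwE[OF P(6)] by blast
      have "Tv B (\<phi> a)" unfolding Tv_def Be ltree_simps tree_simps
      proof (intro conjI ballI)
        show "chB (\<phi> a) \<noteq> {}" using P(11) Yne by simp
      next
        fix c assume "c \<in> chB (\<phi> a)"
        then have "lB c \<in> (\<lambda>t'. (s, t')) ` chT t" using P(11) bij_betwE[OF P(12)] by blast
        moreover have "lB (\<phi> a) = (s, t)" using P(9) P(1) aX P(2) by simp
        ultimately show "fst (lB c) = fst (lB (\<phi> a))" by auto
      qed
      moreover have "lB (\<phi> a) = (s, t)" using P(9) P(1) aX P(2) by simp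
      moreover have "S.le s x1" using S.le_trans[OF S.child_le[OF sE si(1)]] x(6) si(2) by simp
      ultimately show ?thesis using wit[OF pa] x(5) si(2) by simp
    next
      case 2
      obtain c where c: "c \<in> X" using Xne by auto
      then obtain si where si: "si \<in> chS s" "lA c = (si, t)" using bij_betwE[OF P(6)] by blast
      have "fst (lA c) = s" using tv(2) c P(3) 2 P(2) by auto
      then show ?thesis using si S.child_neq[OF sE si(1)] by simp
    next
      case 3
      have pe: "\<phi> e \<in> EB" using bij_betwE[OF P(8)] 3 by blast
      have le: "lB (\<phi> e) = lA e" using P(9) 3 by auto
      have ch: "chB (\<phi> e) = \<phi> ` chA e" using P(10) 3 by auto
      have "Tv B (\<phi> e)" unfolding Tv_def Be ltree_simps tree_simps
      proof (intro conjI ballI)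
        show "chB (\<phi> e) \<noteq> {}" using ch tv(1) by simp
      next
        fix c' assume "c' \<in> chB (\<phi> e)"
        then obtain c where c: "c \<in> chA e" "c' = \<phi> c" using ch by auto
        have cE: "c \<in> EA" using X.U.chE' x(4) c(1) .
        have "c \<notin> X"
        proof
          assume "c \<in> X"
          then have "e = a" using X.U.par_uniq[OF x(4) P(1) c(1)] P(3) by simp
          then show False using 3 by simp
        qed
        then have "lB (\<phi> c) = lA c" using P(9) cE by simp
        then show "fst (lB c') = fst (lB (\<phi> e))" using c tv(2) le by simp
      qed
      then show ?thesis using wit[OF pe] le x(5,6) by simp
    qed
  qed
qed

end

context shuf
begin

lemma enum_bij_sub: "K \<subseteq> LL D \<Longrightarrow> bij_betw (enum D) (idx D ` K) K"
proof (rule bij_betw_subset[OF enum_bij])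
  assume K: "K \<subseteq> LL D"
  show "idx D ` K \<subseteq> {0..<card (LL D)}" using idx_in K by auto
  show "enum D ` idx D ` K = K"
  proof
    show "enum D ` idx D ` K \<subseteq> K" using enum_idx K by auto
    show "K \<subseteq> enum D ` idx D ` K"
    proof
      fix z assume "z \<in> K"
      then have "z \<in> LL D" using K by blast
      then have "z = enum D (idx D z)" using enum_idx[of z D] by simp
      then show "z \<in> enum D ` idx D ` K" using \<open>z \<in> K\<close> by blast
    qed
  qed
qed

lemma enum_img_idx: "K \<subseteq> LL D \<Longrightarrow> enum D ` idx D ` K = K"
  using enum_bij_sub unfolding bij_betw_def by blast

lemma idx_bij_sub: "K \<subseteq> LL D \<Longrightarrow> bij_betw (idx D) K (idx D ` K)"
  using bij_betw_subset[OF idx_bij] by auto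

lemma idx_diff: "K \<subseteq> LL D \<Longrightarrow> {0..<card (LL D)} - idx D ` K = idx D ` (LL D - K)"
proof -
  assume K: "K \<subseteq> LL D"
  have inj: "inj_on (idx D) (LL D)" using idx_bij unfolding bij_betw_def by simp
  have "idx D ` (LL D - K) = idx D ` LL D - idx D ` K" using inj_on_image_set_diff[OF inj _ K] by simp
  also have "idx D ` LL D = {0..<card (LL D)}" using idx_bij unfolding bij_betw_def by simp
  finally show ?thesis by simp
qed

lemma kids_eq: "z \<noteq> x \<Longrightarrow> kids (insert x D) z = kids D z"
  unfolding kids_def Sst_def Tst_def by simp

lemma perc_canon:
  assumes D: "D \<in> Down" and D': "insert (s, t) D \<in> Down" and nx: "(s, t) \<notin> D"
  shows "perc_step SS TT (canon D) (canon (insert (s, t) D))"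
proof -
  let ?D' = "insert (s, t) D"
  have sI: "s \<in> S.Inn" and tI: "t \<in> T.Inn" using Down_sub[OF D'] by auto
  have sE: "s \<in> ES" and tE: "t \<in> ET" using sI tI Inn_E by auto
  have F1a: "(s, t) \<in> LL D"
  proof -
    have "CC D s t" unfolding CC_def
    proof (intro conjI impI allI)
      fix b' assume "T.lt b' t"
      then have "(s, b') \<in> ?D'" using Down_D[OF D'] by blast
      then show "(s, b') \<in> D" using \<open>T.lt b' t\<close> T.lt_def by auto
    next
      fix a' assume "S.lt a' s"
      show "(a', t) \<notin> D"
      proof
        assume "(a', t) \<in> D"
        then have "(s, t) \<in> D" using Down_U[OF D _ _ sI] \<open>S.lt a' s\<close> S.lt_def by blast
        then show False using nx by simp
      qed
    qed
    then show ?thesis using sE tE unfolding LL_def by simp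
  qed
  have F1b: "(s, t) \<in> LL ?D'"
  proof -
    have "CC ?D' s t" unfolding CC_def
    proof (intro conjI impI allI)
      fix b' assume "T.lt b' t"
      then show "(s, b') \<in> ?D'" using Down_D[OF D'] by blast
    next
      fix a' assume lt: "S.lt a' s"
      show "(a', t) \<notin> ?D'"
      proof
        assume "(a', t) \<in> ?D'"
        moreover have "a' \<noteq> s" using lt S.lt_def by auto
        ultimately have "(a', t) \<in> D" by simp
        then have "(s, t) \<in> D" using Down_U[OF D _ _ sI] lt S.lt_def by blast
        then show False using nx by simp
      qed
    qed
    then show ?thesis using sE tE unfolding LL_def by simp
  qed
  have kA: "kids D (s, t) = Sk (s, t)" using sI nx unfolding kids_def Sst_def by simp
  have kB: "kids ?D' (s, t) = Tk (s, t)" using tI unfolding kids_def Sst_def Tst_def by simp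
  have Fc: "kids D (si, t) = Tk (si, t)" if si: "si \<in> chS s" for si
  proof -
    have "si \<noteq> s" using S.child_neq[OF sE si] .
    have "si \<in> S.Inn \<Longrightarrow> (si, t) \<in> D"
    proof -
      assume "si \<in> S.Inn"
      then have "(si, t) \<in> ?D'" using Down_U[OF D' _ S.child_le[OF sE si]] by blast
      then show "(si, t) \<in> D" using \<open>si \<noteq> s\<close> by simp
    qed
    then show ?thesis using tI unfolding kids_def Sst_def Tst_def by auto
  qed
  have Fyn: "(s, tj) \<notin> ?D'" if tj: "tj \<in> chT t" for tj
  proof
    assume "(s, tj) \<in> ?D'"
    moreover have "tj \<noteq> t" using T.child_neq[OF tE tj] .
    ultimately have "(s, tj) \<in> D" by simp
    then have "(s, t) \<in> D" using Down_D[OF D _ T.child_lt[OF tE tj]] by blast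
    then show False using nx by simp
  qed
  have Fy: "kids ?D' (s, tj) = Sk (s, tj)" if tj: "tj \<in> chT t" for tj
    using Fyn[OF tj] sI unfolding kids_def Sst_def by simp
  have SkA: "Sk (s, t) \<subseteq> LL D" using kids_sub[OF D F1a] kA by simp
  have TkB: "Tk (s, t) \<subseteq> LL ?D'" using kids_sub[OF D' F1b] kB by simp
  have F2: "LL D - Sk (s, t) = LL ?D' - Tk (s, t)"
  proof (rule Set.set_eqI)
    fix z :: "'e \<times> 'f"
    obtain a b where z: "z = (a, b)" by fastforce
    consider (A) "a = s" "T.lt t b" | (B) "b = t" "S.lt s a" | (C) "\<not> (a = s \<and> T.lt t b)" "\<not> (b = t \<and> S.lt s a)"
      by blast
    then show "z \<in> LL D - Sk (s, t) \<longleftrightarrow> z \<in> LL ?D' - Tk (s, t)"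
    proof cases
      case A
      have n1: "z \<notin> LL D" using A nx sI z unfolding LL_def CC_def by auto
      have "z \<notin> LL ?D' - Tk (s, t)"
      proof
        assume h: "z \<in> LL ?D' - Tk (s, t)"
        obtain tj where tj: "tj \<in> chT t" "T.le tj b" using T.lt_child[OF A(2)] by auto
        have "tj \<noteq> b" using h z A tj(1) unfolding Tk_def by auto
        then have lt: "T.lt tj b" using tj(2) T.lt_def by simp
        then have "(s, tj) \<in> ?D'" using h z A sI unfolding LL_def CC_def by auto
        moreover have "(s, tj) \<notin> ?D'" using Fyn[OF tj(1)] .
        ultimately show False by simp
      qed
      then show ?thesis using n1 by simp
    next
      case B
      have n2: "z \<notin> LL ?D'" using B tI z unfolding LL_def CC_def by auto
      have "z \<notin> LL D - Sk (s, t)"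
      proof
        assume h: "z \<in> LL D - Sk (s, t)"
        obtain si where si: "si \<in> chS s" "S.le si a" using S.lt_child[OF B(2)] by auto
        have "si \<noteq> a" using h z B si(1) unfolding Sk_def by auto
        then have lt: "S.lt si a" using si(2) S.lt_def by simp
        then have "(si, t) \<notin> D" using h z B tI unfolding LL_def CC_def by auto
        moreover have "si \<noteq> s" using S.child_neq[OF sE si(1)] .
        moreover have "(si, t) \<in> ?D'" using Down_U[OF D' _ S.child_le[OF sE si(1)] S.lt_Int[OF lt]] by blast
        ultimately show False by simp
      qed
      then show ?thesis using n2 by simp
    next
      case C
      have "CC D a b \<longleftrightarrow> CC ?D' a b"
        unfolding CC_def using C by auto
      moreover have "z \<notin> Sk (s, t)" using C z S.child_lt[OF sE] unfolding Sk_def by auto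
      moreover have "z \<notin> Tk (s, t)" using C z T.child_lt[OF tE] unfolding Tk_def by auto
      ultimately show ?thesis using z unfolding LL_def by auto
    qed
  qed
  let ?a = "idx D (s, t)"
  let ?X = "idx D ` Sk (s, t)"
  let ?Y = "idx ?D' ` Tk (s, t)"
  let ?phi = "idx ?D' \<circ> enum D"
  have ea: "enum D ?a = (s, t)" using enum_idx[OF F1a] .
  have chA: "(\<lambda>i. idx D ` kids D (enum D i)) ?a = ?X" using ea kA by simp
  have NX: "{0..<card (LL D)} - ?X = idx D ` (LL D - Sk (s, t))" using idx_diff[OF SkA] .
  have NY: "{0..<card (LL ?D')} - ?Y = idx ?D' ` (LL ?D' - Tk (s, t))" using idx_diff[OF TkB] .
  have phi_bij: "bij_betw ?phi ({0..<card (LL D)} - ?X) ({0..<card (LL ?D')} - ?Y)"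
  proof -
    have b1: "bij_betw (enum D) (idx D ` (LL D - Sk (s, t))) (LL D - Sk (s, t))"
      using enum_bij_sub by blast
    have b2: "bij_betw (idx ?D') (LL ?D' - Tk (s, t)) (idx ?D' ` (LL ?D' - Tk (s, t)))"
      using idx_bij_sub by blast
    show ?thesis unfolding NX NY using bij_betw_trans[OF b1 b2[folded F2]] F2 by simp
  qed
  have phi_e: "enum D e \<in> LL D - Sk (s, t) \<and> ?phi e = idx ?D' (enum D e) \<and> enum D e \<in> LL ?D'"
    if e: "e \<in> {0..<card (LL D)} - ?X" for e
  proof -
    obtain z where z: "z \<in> LL D - Sk (s, t)" "e = idx D z" using e NX by auto
    then have "enum D e = z" using enum_idx by auto
    then show ?thesis using z F2 by auto
  qed
  have rootX: "(rS, rT) \<notin> Sk (s, t)" using S.r_nch[OF sE] unfolding Sk_def by auto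
  show ?thesis unfolding perc_step_def Let_def canon_simps
  proof (rule conjI, fact canon_shuffle[OF D], rule conjI, fact canon_shuffle[OF D'],
      rule exI[of _ ?a], rule exI[of _ ?X], rule exI[of _ ?Y], rule exI[of _ ?phi], rule exI[of _ s],
      rule exI[of _ t], intro conjI)
    show "?a \<in> {0..<card (LL D)}" using idx_in[OF F1a] by simp
    show "enum D ?a = (s, t)" using ea .
    show "idx D ` kids D (enum D ?a) = ?X" using ea kA by simp
    show "above SS s \<noteq> {}" using sI unfolding S.Inn_def by simp
    show "above TT t \<noteq> {}" using tI unfolding T.Inn_def by simp
    show "bij_betw (enum D) ?X ((\<lambda>s'. (s', t)) ` above SS s)"
      using enum_bij_sub[OF SkA] unfolding Sk_def by simp
    show "\<forall>x\<in>?X. bij_betw (enum D) (idx D ` kids D (enum D x)) ((\<lambda>t'. (fst (enum D x), t')) ` above TT t)"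
    proof
      fix x assume "x \<in> ?X"
      then obtain si where si: "si \<in> chS s" "x = idx D (si, t)" unfolding Sk_def by auto
      have siL: "(si, t) \<in> LL D" using SkA si(1) unfolding Sk_def by auto
      have ex: "enum D x = (si, t)" using enum_idx[OF siL] si(2) by simp
      have "Tk (si, t) \<subseteq> LL D" using kids_sub[OF D siL] Fc[OF si(1)] by simp
      then show "bij_betw (enum D) (idx D ` kids D (enum D x)) ((\<lambda>t'. (fst (enum D x), t')) ` above TT t)"
        using enum_bij_sub ex Fc[OF si(1)] unfolding Tk_def by simp
    qed
    show "?Y \<subseteq> {0..<card (LL ?D')}" using idx_in TkB by auto
    show "bij_betw ?phi ({0..<card (LL D)} - ?X) ({0..<card (LL ?D')} - ?Y)" using phi_bij .
    show "?phi (idx D (rS, rT)) = idx ?D' (rS, rT)" using enum_idx[OF root_LL] by simp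
    show "\<forall>e\<in>{0..<card (LL D)} - ?X. enum ?D' (?phi e) = enum D e"
      using phi_e enum_idx by auto
    show "\<forall>e\<in>{0..<card (LL D)} - ?X - {?a}.
        idx ?D' ` kids ?D' (enum ?D' (?phi e)) = ?phi ` idx D ` kids D (enum D e)"
    proof
      fix e assume e: "e \<in> {0..<card (LL D)} - ?X - {?a}"
      have pe: "enum D e \<in> LL D - Sk (s, t)" "?phi e = idx ?D' (enum D e)" "enum D e \<in> LL ?D'"
        using phi_e e by auto
      have ne: "enum D e \<noteq> (s, t)"
      proof
        assume "enum D e = (s, t)"
        then have "idx D (enum D e) = ?a" by simp
        moreover have "idx D (enum D e) = e" using idx_enum e by auto
        ultimately show False using e by simp
      qed
      have ks: "kids D (enum D e) \<subseteq> LL D" using kids_sub[OF D] pe(1) by blast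
      have "enum ?D' (?phi e) = enum D e" using pe enum_idx by simp
      then have "idx ?D' ` kids ?D' (enum ?D' (?phi e)) = idx ?D' ` kids D (enum D e)"
        using kids_eq[OF ne] by simp
      also have "\<dots> = idx ?D' ` enum D ` idx D ` kids D (enum D e)" using enum_img_idx[OF ks] by simp
      also have "\<dots> = ?phi ` idx D ` kids D (enum D e)" by (simp add: image_comp)
      finally show "idx ?D' ` kids ?D' (enum ?D' (?phi e)) = ?phi ` idx D ` kids D (enum D e)" .
    qed
    have pa: "?phi ?a = idx ?D' (s, t)" using ea by simp
    show "idx ?D' ` kids ?D' (enum ?D' (?phi ?a)) = ?Y" using pa enum_idx[OF F1b] kB by simp
    show "bij_betw (enum ?D') ?Y ((\<lambda>t'. (s, t')) ` above TT t)"
      using enum_bij_sub[OF TkB] unfolding Tk_def by simp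
    show "\<forall>y\<in>?Y. idx ?D' ` kids ?D' (enum ?D' y) =
        ?phi ` {e. \<exists>x\<in>?X. e \<in> idx D ` kids D (enum D x) \<and> snd (enum D e) = snd (enum ?D' y)}"
    proof
      fix y assume "y \<in> ?Y"
      then obtain tj where tj: "tj \<in> chT t" "y = idx ?D' (s, tj)" unfolding Tk_def by auto
      have yL: "(s, tj) \<in> LL ?D'" using TkB tj(1) unfolding Tk_def by auto
      have ey: "enum ?D' y = (s, tj)" using enum_idx[OF yL] tj(2) by simp
      let ?M = "Sk (s, tj)"
      have MLs: "?M \<subseteq> LL D"
      proof
        fix z assume "z \<in> ?M"
        then obtain si where si: "si \<in> chS s" "z = (si, tj)" unfolding Sk_def by auto
        have siL: "(si, t) \<in> LL D" using SkA si(1) unfolding Sk_def by auto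
        have "z \<in> kids D (si, t)" using Fc[OF si(1)] si tj(1) unfolding Tk_def by auto
        then show "z \<in> LL D" using kids_sub[OF D siL] by blast
      qed
      have set: "{e. \<exists>x\<in>?X. e \<in> idx D ` kids D (enum D x) \<and> snd (enum D e) = snd (enum ?D' y)} = idx D ` ?M"
      proof
        show "{e. \<exists>x\<in>?X. e \<in> idx D ` kids D (enum D x) \<and> snd (enum D e) = snd (enum ?D' y)} \<subseteq> idx D ` ?M"
        proof
          fix e assume "e \<in> {e. \<exists>x\<in>?X. e \<in> idx D ` kids D (enum D x) \<and> snd (enum D e) = snd (enum ?D' y)}"
          then obtain x where x: "x \<in> ?X" "e \<in> idx D ` kids D (enum D x)" "snd (enum D e) = tj"
            using ey by auto
          obtain si where si: "si \<in> chS s" "x = idx D (si, t)" using x(1) unfolding Sk_def by auto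
          have siL: "(si, t) \<in> LL D" using SkA si(1) unfolding Sk_def by auto
          have "enum D x = (si, t)" using enum_idx[OF siL] si(2) by simp
          then obtain k where k: "k \<in> Tk (si, t)" "e = idx D k" using x(2) Fc[OF si(1)] by auto
          have kL: "k \<in> LL D" using kids_sub[OF D siL] Fc[OF si(1)] k(1) by auto
          have "enum D e = k" using enum_idx[OF kL] k(2) by simp
          then have "k = (si, tj)" using k(1) x(3) unfolding Tk_def by auto
          then show "e \<in> idx D ` ?M" using k(2) si(1) unfolding Sk_def by auto
        qed
        show "idx D ` ?M \<subseteq> {e. \<exists>x\<in>?X. e \<in> idx D ` kids D (enum D x) \<and> snd (enum D e) = snd (enum ?D' y)}"
        proof
          fix e assume "e \<in> idx D ` ?M"
          then obtain si where si: "si \<in> chS s" "e = idx D (si, tj)" unfolding Sk_def by auto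
          have siL: "(si, t) \<in> LL D" using SkA si(1) unfolding Sk_def by auto
          have eL: "(si, tj) \<in> LL D" using MLs si(1) unfolding Sk_def by auto
          have ex: "enum D (idx D (si, t)) = (si, t)" using enum_idx[OF siL] .
          have "(si, tj) \<in> kids D (si, t)" using Fc[OF si(1)] tj(1) unfolding Tk_def by auto
          then have "e \<in> idx D ` kids D (enum D (idx D (si, t)))" using ex si(2) by simp
          moreover have "idx D (si, t) \<in> ?X" using si(1) unfolding Sk_def by auto
          moreover have "snd (enum D e) = snd (enum ?D' y)" using enum_idx[OF eL] si(2) ey by simp
          ultimately show "e \<in> {e. \<exists>x\<in>?X. e \<in> idx D ` kids D (enum D x) \<and> snd (enum D e) = snd (enum ?D' y)}"
            by blast
        qed
      qed
      have "idx ?D' ` kids ?D' (enum ?D' y) = idx ?D' ` ?M" using ey Fy[OF tj(1)] by simp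
      also have "\<dots> = idx ?D' ` enum D ` idx D ` ?M" using enum_img_idx[OF MLs] by simp
      also have "\<dots> = ?phi ` idx D ` ?M" by (simp add: image_comp)
      finally show "idx ?D' ` kids ?D' (enum ?D' y) =
        ?phi ` {e. \<exists>x\<in>?X. e \<in> idx D ` kids D (enum D x) \<and> snd (enum D e) = snd (enum ?D' y)}"
        using set by simp
    qed
  qed
qed

end

lemma lattice_transfer:
  fixes C :: "'x set" and R :: "'x \<Rightarrow> 'x \<Rightarrow> bool" and F :: "'x \<Rightarrow> 'y set" and M :: "'y set set"
  assumes bij: "bij_betw F C M" and le: "\<And>x y. x \<in> C \<Longrightarrow> y \<in> C \<Longrightarrow> R x y \<longleftrightarrow> F x \<subseteq> F y"
    and un: "\<And>A B. A \<in> M \<Longrightarrow> B \<in> M \<Longrightarrow> A \<union> B \<in> M"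
    and int: "\<And>A B. A \<in> M \<Longrightarrow> B \<in> M \<Longrightarrow> A \<inter> B \<in> M"
  shows "distrib_lattice_on \<lparr>carrier = C, eq = (=), le = R\<rparr>"
proof -
  let ?L = "\<lparr>carrier = C, eq = (=), le = R\<rparr> :: 'x gorder"
  let ?G = "inv_into C F"
  have G1: "A \<in> M \<Longrightarrow> ?G A \<in> C" for A using bij by (metis bij_betw_def inv_into_into)
  have G2: "A \<in> M \<Longrightarrow> F (?G A) = A" for A using bij by (metis bij_betw_def f_inv_into_f)
  have Fin: "x \<in> C \<Longrightarrow> F x \<in> M" for x using bij bij_betwE by blast
  have inj: "x \<in> C \<Longrightarrow> y \<in> C \<Longrightarrow> F x = F y \<Longrightarrow> x = y" for x y
    using bij unfolding bij_betw_def inj_on_def by blast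
  interpret po: partial_order ?L
  proof (unfold_locales, simp_all)
    fix x y z assume "x \<in> C" then show "R x x" using le by simp
  next
    fix x y assume "R x y" "R y x" "x \<in> C" "y \<in> C"
    then show "x = y" using le inj by blast
  next
    fix x y z assume "R x y" "R y z" "x \<in> C" "y \<in> C" "z \<in> C"
    then show "R x z" using le by blast
  qed
  have J: "least ?L (?G (F x \<union> F y)) (Upper ?L {x, y})" if "x \<in> C" "y \<in> C" for x y
  proof -
    have m: "F x \<union> F y \<in> M" using un Fin that by blast
    show ?thesis unfolding least_def Upper_def using G1[OF m] G2[OF m] le that by auto
  qed
  have Me: "greatest ?L (?G (F x \<inter> F y)) (Lower ?L {x, y})" if "x \<in> C" "y \<in> C" for x y
  proof -
    have m: "F x \<inter> F y \<in> M" using int Fin that by blast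
    show ?thesis unfolding greatest_def Lower_def using G1[OF m] G2[OF m] le that by auto
  qed
  have joinE: "x \<squnion>\<^bsub>?L\<^esub> y = ?G (F x \<union> F y)" if "x \<in> C" "y \<in> C" for x y
  proof -
    have "least ?L (SOME s. least ?L s (Upper ?L {x, y})) (Upper ?L {x, y})"
      using someI[of "\<lambda>s. least ?L s (Upper ?L {x, y})", OF J[OF that]] .
    then show ?thesis unfolding join_def sup_def
      using po.least_unique J[OF that] by (metis po.eq_is_equal)
  qed
  have meetE: "x \<sqinter>\<^bsub>?L\<^esub> y = ?G (F x \<inter> F y)" if "x \<in> C" "y \<in> C" for x y
  proof -
    have "greatest ?L (SOME s. greatest ?L s (Lower ?L {x, y})) (Lower ?L {x, y})"
      using someI[of "\<lambda>s. greatest ?L s (Lower ?L {x, y})", OF Me[OF that]] .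
    then show ?thesis unfolding meet_def inf_def
      using po.greatest_unique Me[OF that] by (metis po.eq_is_equal)
  qed
  have lat: "lattice ?L"
  proof (unfold_locales)
    fix x y assume "x \<in> carrier ?L" "y \<in> carrier ?L"
    then show "\<exists>s. least ?L s (Upper ?L {x, y})" using J by auto
  next
    fix x y assume "x \<in> carrier ?L" "y \<in> carrier ?L"
    then show "\<exists>s. greatest ?L s (Lower ?L {x, y})" using Me by auto
  qed
  show ?thesis unfolding distrib_lattice_on_def
  proof (intro conjI ballI)
    show "lattice ?L" by (rule lat)
  next
    fix x y z assume xyz: "x \<in> carrier ?L" "y \<in> carrier ?L" "z \<in> carrier ?L"
    then have c: "x \<in> C" "y \<in> C" "z \<in> C" by auto
    have m: "F y \<union> F z \<in> M" "F x \<inter> F y \<in> M" "F x \<inter> F z \<in> M" using un int Fin c by blast+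
    have yz: "y \<squnion>\<^bsub>?L\<^esub> z \<in> C" "x \<sqinter>\<^bsub>?L\<^esub> y \<in> C" "x \<sqinter>\<^bsub>?L\<^esub> z \<in> C"
      using joinE meetE c G1 m by auto
    have "F (x \<sqinter>\<^bsub>?L\<^esub> (y \<squnion>\<^bsub>?L\<^esub> z)) = F x \<inter> (F y \<union> F z)"
      using meetE[OF c(1) yz(1)] joinE[OF c(2,3)] G2 m Fin c int by auto
    also have "\<dots> = (F x \<inter> F y) \<union> (F x \<inter> F z)" by blast
    also have "\<dots> = F ((x \<sqinter>\<^bsub>?L\<^esub> y) \<squnion>\<^bsub>?L\<^esub> (x \<sqinter>\<^bsub>?L\<^esub> z))"
      using joinE[OF yz(2,3)] meetE[OF c(1,2)] meetE[OF c(1,3)] G2 m un by auto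
    finally have "F (x \<sqinter>\<^bsub>?L\<^esub> (y \<squnion>\<^bsub>?L\<^esub> z)) = F ((x \<sqinter>\<^bsub>?L\<^esub> y) \<squnion>\<^bsub>?L\<^esub> (x \<sqinter>\<^bsub>?L\<^esub> z))" .
    moreover have "x \<sqinter>\<^bsub>?L\<^esub> (y \<squnion>\<^bsub>?L\<^esub> z) \<in> C"
      using meetE[OF c(1) yz(1)] G1 int Fin c yz by auto
    moreover have "(x \<sqinter>\<^bsub>?L\<^esub> y) \<squnion>\<^bsub>?L\<^esub> (x \<sqinter>\<^bsub>?L\<^esub> z) \<in> C"
      using joinE[OF yz(2,3)] G1 un Fin yz by auto
    ultimately show "x \<sqinter>\<^bsub>?L\<^esub> (y \<squnion>\<^bsub>?L\<^esub> z) = (x \<sqinter>\<^bsub>?L\<^esub> y) \<squnion>\<^bsub>?L\<^esub> (x \<sqinter>\<^bsub>?L\<^esub> z)"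
      using inj by blast
  qed
qed

lemma iso_refl: "ltree_iso A A"
  unfolding ltree_iso_def by (intro exI[of _ id]) (auto simp: bij_betw_def)

context shuf
begin

definition cls :: "('e \<times> 'f) ltree \<Rightarrow> ('e \<times> 'f) ltree set" where
  "cls A = {B. is_shuffle SS TT B \<and> ltree_iso A B}"

definition Phi :: "('e \<times> 'f) ltree set \<Rightarrow> ('e \<times> 'f) set" where
  "Phi C = DD (SOME A. A \<in> C)"

lemma Sh_eq: "Sh SS TT = {cls A | A. is_shuffle SS TT A}"
  unfolding Sh_def cls_def by simp

lemma self_cls: "is_shuffle SS TT A \<Longrightarrow> A \<in> cls A"
  unfolding cls_def using iso_refl by simp

lemma mem_cls: "is_shuffle SS TT A \<Longrightarrow> B \<in> cls A \<Longrightarrow> is_shuffle SS TT B \<and> DD B = DD A"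
proof -
  assume A: "is_shuffle SS TT A" and "B \<in> cls A"
  then have h: "is_shuffle SS TT B" "ltree_iso A B" unfolding cls_def by auto
  show ?thesis using iso_DD[OF A h(1) h(2)] h(1) by simp
qed

lemma Phi_cls: "is_shuffle SS TT A \<Longrightarrow> Phi (cls A) = DD A"
proof -
  assume A: "is_shuffle SS TT A"
  have "(SOME B. B \<in> cls A) \<in> cls A" using someI[of "\<lambda>B. B \<in> cls A", OF self_cls[OF A]] .
  then show ?thesis unfolding Phi_def using mem_cls[OF A] by simp
qed

lemma cls_eq:
  assumes A: "is_shuffle SS TT A" and B: "is_shuffle SS TT B"
  shows "cls A = cls B \<longleftrightarrow> DD A = DD B"
proof
  assume "cls A = cls B"
  then have "B \<in> cls A" using self_cls[OF B] by simp
  then show "DD A = DD B" using mem_cls[OF A] by simp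
next
  assume eq: "DD A = DD B"
  have iA: "ltree_iso A (canon (DD A))" and DA: "DD A \<in> Down" using shuffle_canon[OF A] by auto
  have iB: "ltree_iso B (canon (DD B))" using shuffle_canon[OF B] by auto
  have tc: "tree (ltree_tree (canon (DD A)))" using shuffle_tree[OF canon_shuffle[OF DA]] .
  have "ltree_iso (canon (DD A)) B" using iso_sym[OF shuffle_tree[OF B] iB] eq by simp
  then have AB: "ltree_iso A B" using iso_trans[OF iA] by blast
  have BA: "ltree_iso B A" using iso_sym[OF shuffle_tree[OF A] AB] .
  show "cls A = cls B"
  proof
    show "cls A \<subseteq> cls B" unfolding cls_def using iso_trans[OF BA] by blast
    show "cls B \<subseteq> cls A" unfolding cls_def using iso_trans[OF AB] by blast
  qed
qed

lemma cls_canon: "is_shuffle SS TT A \<Longrightarrow> cls A = cls (canon (DD A))"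
proof -
  assume A: "is_shuffle SS TT A"
  have DA: "DD A \<in> Down" using shuffle_canon[OF A] by simp
  show ?thesis using cls_eq[OF A canon_shuffle[OF DA]] DD_canon[OF DA] by simp
qed

lemma Sh_img: "Sh SS TT = (\<lambda>D. cls (canon D)) ` Down"
proof
  show "Sh SS TT \<subseteq> (\<lambda>D. cls (canon D)) ` Down"
  proof
    fix C assume "C \<in> Sh SS TT"
    then obtain A where A: "is_shuffle SS TT A" "C = cls A" unfolding Sh_eq by auto
    have "DD A \<in> Down" using shuffle_canon[OF A(1)] by simp
    then show "C \<in> (\<lambda>D. cls (canon D)) ` Down" using cls_canon[OF A(1)] A(2) by blast
  qed
  show "(\<lambda>D. cls (canon D)) ` Down \<subseteq> Sh SS TT"
  proof
    fix C assume "C \<in> (\<lambda>D. cls (canon D)) ` Down"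
    then obtain D where "D \<in> Down" "C = cls (canon D)" by auto
    then show "C \<in> Sh SS TT" unfolding Sh_eq using canon_shuffle by blast
  qed
qed

lemma Phi_canon: "D \<in> Down \<Longrightarrow> Phi (cls (canon D)) = D"
  using Phi_cls[OF canon_shuffle] DD_canon by simp

lemma Phi_bij: "bij_betw Phi (Sh SS TT) Down"
  unfolding bij_betw_def
proof
  show "inj_on Phi (Sh SS TT)"
  proof (rule inj_onI)
    fix C1 C2 assume "C1 \<in> Sh SS TT" "C2 \<in> Sh SS TT" "Phi C1 = Phi C2"
    then obtain D1 D2 where "D1 \<in> Down" "D2 \<in> Down" "C1 = cls (canon D1)" "C2 = cls (canon D2)"
      unfolding Sh_img by auto
    then show "C1 = C2" using Phi_canon \<open>Phi C1 = Phi C2\<close> by simp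
  qed
  show "Phi ` Sh SS TT = Down"
  proof
    show "Phi ` Sh SS TT \<subseteq> Down" unfolding Sh_img using Phi_canon by auto
    show "Down \<subseteq> Phi ` Sh SS TT"
    proof
      fix D assume "D \<in> Down"
      then have "D = Phi (cls (canon D))" "cls (canon D) \<in> Sh SS TT" using Phi_canon Sh_img by auto
      then show "D \<in> Phi ` Sh SS TT" by blast
    qed
  qed
qed

lemma Down_fin: "finite Down"
proof -
  have "Down \<subseteq> Pow (S.Inn \<times> T.Inn)" unfolding Down_def by auto
  moreover have "finite (S.Inn \<times> T.Inn)" using S.finE T.finE unfolding S.Inn_def T.Inn_def by simp
  ultimately show ?thesis using finite_subset by blast
qed

lemma Down_un: "A \<in> Down \<Longrightarrow> B \<in> Down \<Longrightarrow> A \<union> B \<in> Down"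
proof -
  assume A: "A \<in> Down" and B: "B \<in> Down"
  show "A \<union> B \<in> Down" unfolding Down_def
  proof (intro CollectI conjI allI impI)
    show "A \<union> B \<subseteq> S.Inn \<times> T.Inn" using Down_sub[OF A] Down_sub[OF B] by (rule Un_least)
  next
    fix a b b' assume "(a, b) \<in> A \<union> B" "T.lt b' b"
    then show "(a, b') \<in> A \<union> B" using Down_D[OF A] Down_D[OF B] by blast
  next
    fix a b a' assume "(a, b) \<in> A \<union> B" "S.le a a'" "a' \<in> S.Inn"
    then show "(a', b) \<in> A \<union> B" using Down_U[OF A] Down_U[OF B] by blast
  qed
qed

lemma Down_int: "A \<in> Down \<Longrightarrow> B \<in> Down \<Longrightarrow> A \<inter> B \<in> Down"
proof -
  assume A: "A \<in> Down" and B: "B \<in> Down"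
  show "A \<inter> B \<in> Down" unfolding Down_def
  proof (intro CollectI conjI allI impI)
    show "A \<inter> B \<subseteq> S.Inn \<times> T.Inn" using Down_sub[OF A] by blast
  next
    fix a b b' assume "(a, b) \<in> A \<inter> B" "T.lt b' b"
    then show "(a, b') \<in> A \<inter> B" using Down_D[OF A] Down_D[OF B] by blast
  next
    fix a b a' assume "(a, b) \<in> A \<inter> B" "S.le a a'" "a' \<in> S.Inn"
    then show "(a', b) \<in> A \<inter> B" using Down_U[OF A] Down_U[OF B] by blast
  qed
qed

lemma perc_rel_Phi: "perc_rel SS TT C1 C2 \<Longrightarrow> Phi C1 \<subseteq> Phi C2"
proof -
  assume "perc_rel SS TT C1 C2"
  then obtain A B where h: "C1 \<in> Sh SS TT" "C2 \<in> Sh SS TT" "A \<in> C1" "B \<in> C2" "perc_step SS TT A B"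
    unfolding perc_rel_def by blast
  obtain A0 where A0: "is_shuffle SS TT A0" "C1 = cls A0" using h(1) unfolding Sh_eq by auto
  obtain B0 where B0: "is_shuffle SS TT B0" "C2 = cls B0" using h(2) unfolding Sh_eq by auto
  have "Phi C1 = DD A" using Phi_cls[OF A0(1)] mem_cls[OF A0(1)] h(3) A0(2) by simp
  moreover have "Phi C2 = DD B" using Phi_cls[OF B0(1)] mem_cls[OF B0(1)] h(4) B0(2) by simp
  ultimately show ?thesis using perc_DD[OF h(5)] by simp
qed

definition prec :: "'e \<times> 'f \<Rightarrow> 'e \<times> 'f \<Rightarrow> bool" where
  "prec y x \<longleftrightarrow> S.le (fst x) (fst y) \<and> T.le (snd y) (snd x)"

lemma chain:
  assumes "D1 \<in> Down" "D2 \<in> Down" "D1 \<subseteq> D2"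
  shows "(perc_rel SS TT)\<^sup>*\<^sup>* (cls (canon D1)) (cls (canon D2))"
proof -
  have "finite (S.Inn \<times> T.Inn)" using S.finE T.finE unfolding S.Inn_def T.Inn_def by simp
  then have fin2: "finite D2" using Down_sub[OF assms(2)] finite_subset by blast
  have "\<forall>D1. D1 \<in> Down \<longrightarrow> D1 \<subseteq> D2 \<longrightarrow> card (D2 - D1) = n \<longrightarrow>
          (perc_rel SS TT)\<^sup>*\<^sup>* (cls (canon D1)) (cls (canon D2))" for n
  proof (induction n)
    case 0
    show ?case
    proof (intro allI impI)
      fix D1 assume "D1 \<in> Down" "D1 \<subseteq> D2" "card (D2 - D1) = 0"
      then have "D1 = D2" using fin2 by auto
      then show "(perc_rel SS TT)\<^sup>*\<^sup>* (cls (canon D1)) (cls (canon D2))" by simp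
    qed
  next
    case (Suc n)
    show ?case
    proof (intro allI impI)
      fix D1 assume D1: "D1 \<in> Down" "D1 \<subseteq> D2" "card (D2 - D1) = Suc n"
      let ?mu = "\<lambda>x. card {y \<in> D2. prec y x}"
      have "D2 - D1 \<noteq> {}"
      proof
        assume "D2 - D1 = {}"
        then have "card (D2 - D1) = 0" by (metis card.empty)
        then show False using D1(3) by linarith
      qed
      then obtain x0 where "x0 \<in> D2 - D1" by auto
      then obtain x where x: "x \<in> D2 - D1" "\<forall>y. y \<in> D2 - D1 \<longrightarrow> ?mu x \<le> ?mu y"
        using ex_has_least_nat[of "\<lambda>x. x \<in> D2 - D1" x0 ?mu] by blast
      obtain s t where st: "x = (s, t)" by fastforce
      have smaller: "?mu y < ?mu x" if y: "y \<in> D2" "\<And>z. prec z y \<Longrightarrow> prec z x" "\<not> prec x y" for y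
      proof (rule psubset_card_mono)
        show "finite {y \<in> D2. prec y x}" using fin2 by simp
        have "prec x x" unfolding prec_def by simp
        then show "{z \<in> D2. prec z y} \<subset> {z \<in> D2. prec z x}" using y x(1) by blast
      qed
      have ins: "insert x D1 \<in> Down"
        unfolding Down_def
      proof (intro CollectI conjI allI impI)
        show "insert x D1 \<subseteq> S.Inn \<times> T.Inn" using Down_sub[OF D1(1)] Down_sub[OF assms(2)] x(1) by auto
      next
        fix a b b' assume ab: "(a, b) \<in> insert x D1" and lt: "T.lt b' b"
        show "(a, b') \<in> insert x D1"
        proof (cases "(a, b) \<in> D1")
          case True then show ?thesis using Down_D[OF D1(1) True lt] by simp
        next
          case False
          then have abx: "(a, b) = (s, t)" using ab st by auto
          have yD: "(a, b') \<in> D2" using Down_D[OF assms(2) _ lt] x(1) st abx by auto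
          show ?thesis
          proof (rule ccontr)
            assume "(a, b') \<notin> insert x D1"
            then have "(a, b') \<in> D2 - D1" using yD by simp
            moreover have "?mu (a, b') < ?mu x"
            proof (rule smaller[OF yD])
              fix z assume "prec z (a, b')" then show "prec z x"
                using st abx lt T.lt_def T.le_trans unfolding prec_def by auto
            next
              show "\<not> prec x (a, b')" using st abx lt T.lt_def T.antisym unfolding prec_def by auto
            qed
            ultimately show False using x(2)[rule_format, of "(a, b')"] by simp
          qed
        qed
      next
        fix a b a' assume ab: "(a, b) \<in> insert x D1" and le: "S.le a a'" and aI: "a' \<in> S.Inn"
        show "(a', b) \<in> insert x D1"
        proof (cases "(a, b) \<in> D1")
          case True then show ?thesis using Down_U[OF D1(1) True le aI] by simp
        next
          case False
          then have abx: "(a, b) = (s, t)" using ab st by auto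
          show ?thesis
          proof (cases "a' = a")
            case True then show ?thesis using ab by simp
          next
            case ne: False
            have yD: "(a', b) \<in> D2" using Down_U[OF assms(2) _ le aI] x(1) st abx by auto
            show ?thesis
            proof (rule ccontr)
              assume "(a', b) \<notin> insert x D1"
              then have "(a', b) \<in> D2 - D1" using yD by simp
              moreover have "?mu (a', b) < ?mu x"
              proof (rule smaller[OF yD])
                fix z assume "prec z (a', b)" then show "prec z x"
                  using st abx le S.le_trans unfolding prec_def by auto
              next
                show "\<not> prec x (a', b)" using st abx le ne S.antisym unfolding prec_def by auto
              qed
              ultimately show False using x(2)[rule_format, of "(a', b)"] by simp
            qed
          qed
        qed
      qed
      have sub: "insert x D1 \<subseteq> D2" using D1(2) x(1) by auto
      have "card (D2 - insert x D1) = n"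
      proof -
        have "D2 - insert x D1 = (D2 - D1) - {x}" by auto
        then show ?thesis using D1(3) x(1) fin2 by simp
      qed
      then have r2: "(perc_rel SS TT)\<^sup>*\<^sup>* (cls (canon (insert x D1))) (cls (canon D2))"
        using Suc.IH ins sub by blast
      have xn: "(s, t) \<notin> D1" using x(1) st by simp
      have "perc_step SS TT (canon D1) (canon (insert (s, t) D1))"
        using perc_canon[OF D1(1) _ xn] ins st by simp
      then have ps: "perc_step SS TT (canon D1) (canon (insert x D1))" using st by simp
      have m1: "cls (canon D1) \<in> Sh SS TT" using Sh_img D1(1) by blast
      have m2: "cls (canon (insert x D1)) \<in> Sh SS TT" using Sh_img ins by blast
      have c1: "canon D1 \<in> cls (canon D1)" using self_cls[OF canon_shuffle[OF D1(1)]] .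
      have c2: "canon (insert x D1) \<in> cls (canon (insert x D1))" using self_cls[OF canon_shuffle[OF ins]] .
      have r1: "perc_rel SS TT (cls (canon D1)) (cls (canon (insert x D1)))"
        unfolding perc_rel_def using m1 m2 c1 c2 ps by blast
      show "(perc_rel SS TT)\<^sup>*\<^sup>* (cls (canon D1)) (cls (canon D2))"
        using converse_rtranclp_into_rtranclp[OF r1 r2] .
    qed
  qed
  then show ?thesis using assms by blast
qed

lemma Sh_cls_Phi: "C \<in> Sh SS TT \<Longrightarrow> C = cls (canon (Phi C))"
  using Sh_img Phi_canon by auto

lemma perc_le_iff:
  assumes "C1 \<in> Sh SS TT" "C2 \<in> Sh SS TT"
  shows "perc_le SS TT C1 C2 \<longleftrightarrow> Phi C1 \<subseteq> Phi C2"
proof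
  assume "perc_le SS TT C1 C2"
  then have "(perc_rel SS TT)\<^sup>*\<^sup>* C1 C2" unfolding perc_le_def by simp
  then show "Phi C1 \<subseteq> Phi C2"
    by (induction rule: rtranclp_induct) (use perc_rel_Phi in blast)+
next
  assume le: "Phi C1 \<subseteq> Phi C2"
  have "Phi C1 \<in> Down" "Phi C2 \<in> Down" using Phi_bij assms bij_betwE by blast+
  then have "(perc_rel SS TT)\<^sup>*\<^sup>* (cls (canon (Phi C1))) (cls (canon (Phi C2)))" using chain le by blast
  moreover have "cls (canon (Phi C1)) = C1" "cls (canon (Phi C2)) = C2" using assms Sh_cls_Phi by auto
  ultimately show "perc_le SS TT C1 C2" unfolding perc_le_def using assms by simp
qed

end

theorem mainTheorem9:
  fixes S :: "'e tree" and T :: "'f tree"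
  assumes "tree S" and "tree T"
  shows "finite (Sh S T) \<and> distrib_lattice_on (Sh_poset S T)"
proof -
  obtain ES rS chS where S: "S = (ES, rS, chS)" by (cases S) auto
  obtain ET rT chT where T: "T = (ET, rT, chT)" by (cases T) auto
  have "rtree ES rS chS" "rtree ET rT chT" using assms S T unfolding tree_def rtree_def by auto
  then interpret X: shuf ES rS chS ET rT chT unfolding shuf_def by simp
  show ?thesis
  proof
    show "finite (Sh S T)" using X.Sh_img X.Down_fin S T by simp
    show "distrib_lattice_on (Sh_poset S T)"
      unfolding Sh_poset_def S T
      by (rule lattice_transfer[OF X.Phi_bij X.perc_le_iff X.Down_un X.Down_int])
  qed
qed

end
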